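(* Let $n_1,n_2,n_3\ge 2$, $r\le\min\{n_1,n_2\}$, $b,c,\tau>0$, and $\mathcal{X}^*=\mathcal{A}^*\diamond\mathcal{B}^*$ with $\mathcal{A}^*\in\mathbb{R}_+^{n_1\times r\times n_3}$, $\mathcal{B}^*\in\mathbb{R}_+^{r\times n_2\times n_3}$, $0\le\mathcal{X}^*_{ijk}\le c/2$, $0\le\mathcal{A}^*_{ijk}\le1$, $0\le\mathcal{B}^*_{ijk}\le b$. Let $4\le m\le n_1n_2n_3$, $\Omega\sim\mathrm{Bern}(\frac{m}{n_1n_2n_3})$, and $\mathcal{Y}_{ijk}=\mathcal{X}^*_{ijk}+\epsilon_{ijk}$ for $(i,j,k)\in\Omega$ with $\epsilon_{ijk}$ i.i.d. Laplace with location $0$ and diversity $\tau$ (density $\frac{1}{2\tau}e^{-|x|/\tau}$). Let $\beta=\max\left\{3,1+\frac{\log(3rn_3^{1.5}b/c)}{\log(n_1\vee n_2)}\right\}$, $\kappa=\frac{c^2}{2\tau^2}$, $\lambda=4(\beta+2)\left(1+\frac{2\kappa}{3}\right)\log(n_1\vee n_2)$. Then the estimator $\widetilde{\mathcal{X}}^\lambda$ satisfies \[ \frac{\mathbb{E}_{\Omega,\mathcal{Y}_\Omega}\|\widetilde{\mathcal{X}}^\lambda-\mathcal{X}^*\|_F^2}{n_1n_2n_3}\le\frac{3c^2(2\tau+c)^2\log(m)}{m\tau^2}+2\left(3+\frac{c^2}{\tau^2}\right)(2\tau+c)^2(\beta+2)\left(\frac{rn_1n_3+\|\mathcal{B}^*\|_0}{m}\right)\log(n_1\vee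 n_2). \]
   Context: Tensor-tensor product $\diamond$: for $\mathcal{X}\in\mathbb{R}^{n_1\times n_2\times n_3}$ with frontal slices $\mathbf{X}^{(1)},\dots,\mathbf{X}^{(n_3)}$ and $\mathcal{Y}\in\mathbb{R}^{n_2\times n_4\times n_3}$, $\mathcal{X}\diamond\mathcal{Y}$ is obtained by multiplying the block-circulant matrix with $(p,q)$ block $\mathbf{X}^{((p-q)\bmod n_3+1)}$ by the vertical stack of the frontal slices of $\mathcal{Y}$ and folding back. $\|\cdot\|_0$ counts nonzero entries, $m\vee n=\max\{m,n\}$. $\Omega\sim\mathrm{Bern}(\gamma)$: each index included independently with probability $\gamma$. $p_x$ denotes the Laplace density with location $x$ and diversity $\tau$. With $\vartheta=2^{\lceil\beta\log_2(n_1\vee n_2)\rceil}$, $\mathfrak{L}$ = tensors in $\mathbb{R}_+^{n_1\times r\times n_3}$ with entries among $\vartheta$ uniformly spaced levels of $[0,1]$; $\mathfrak{D}$ = tensors in $\mathbb{R}_+^{r\times n_2\times n_3}$ with entries $0$ or among $\vartheta$ uniformly spaced levels of $[0,b]$; $\Gamma=\{\mathcal{A}\diamond\mathcal{B}:\mathcal{A}\in\mathfrak{L},\mathcal{B}\in\mathfrak{D},0\le(\mathcal{A}\diamond\mathcal{B})_{ijk}\le c\}$. Estimator: $\widetilde{\mathcal{X}}^\lambda\in\arg\min_{\mathcal{X}=\mathcal{A}\diamond\mathcal{B}\in\Gamma}\{-\log p_{\mathcal{X}_\Omega}(\mathcal{Y}_\Omega)+\lambda\|\mathcal{B}\|_0\}$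 with $p_{\mathcal{X}_\Omega}(\mathcal{Y}_\Omega)=\prod_{(i,j,k)\in\Omega}p_{\mathcal{X}_{ijk}}(\mathcal{Y}_{ijk})$. *)

theory Defs
  imports "HOL-Probability.Probability"
begin

type_synonym tensor = "nat \<Rightarrow> nat \<Rightarrow> nat \<Rightarrow> real"

definition box :: "nat \<Rightarrow> nat \<Rightarrow> nat \<Rightarrow> (nat \<times> nat \<times> nat) set" where
  "box n1 n2 n3 = {0..<n1} \<times> {0..<n2} \<times> {0..<n3}"

text \<open>Tensor-tensor product of A (n1 x r x n3) and B (r x n2 x n3): the p-th frontal slice
  of the result is sum over q of A^((p-q) mod n3) * B^(q) (0-based slices).\<close>
definition tprod :: "nat \<Rightarrow> nat \<Rightarrow> tensor \<Rightarrow> tensor \<Rightarrow> tensor" where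
  "tprod r n3 A B = (\<lambda>i j k. \<Sum>q<n3. \<Sum>l<r. A i l ((k + n3 - q) mod n3) * B l j q)"

definition l0norm :: "nat \<Rightarrow> nat \<Rightarrow> nat \<Rightarrow> tensor \<Rightarrow> nat" where
  "l0norm n1 n2 n3 X = card {(i,j,k) \<in> box n1 n2 n3. X i j k \<noteq> 0}"

definition frob2 :: "nat \<Rightarrow> nat \<Rightarrow> nat \<Rightarrow> tensor \<Rightarrow> real" where
  "frob2 n1 n2 n3 X = (\<Sum>(i,j,k) \<in> box n1 n2 n3. (X i j k)^2)"

definition theta :: "real \<Rightarrow> nat \<Rightarrow> nat \<Rightarrow> nat" where
  "theta \<beta> n1 n2 = 2 ^ nat \<lceil>\<beta> * log 2 (real (max n1 n2))\<rceil>"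

definition levels :: "nat \<Rightarrow> real \<Rightarrow> real set" where
  "levels th u = {u * real t / real (th - 1) | t. t < th}"

definition LL :: "nat \<Rightarrow> nat \<Rightarrow> nat \<Rightarrow> nat \<Rightarrow> tensor set" where
  "LL th n1 r n3 = {A. \<forall>(i,l,k) \<in> box n1 r n3. 0 \<le> A i l k \<and> A i l k \<in> levels th 1}"

definition DD :: "nat \<Rightarrow> real \<Rightarrow> nat \<Rightarrow> nat \<Rightarrow> nat \<Rightarrow> tensor set" where
  "DD th b r n2 n3 = {B. \<forall>(l,j,k) \<in> box r n2 n3. 0 \<le> B l j k \<and>
      (B l j k = 0 \<or> B l j k \<in> levels th b)}"

text \<open>Gamma, parametrised by the factor pairs (A,B) (the penalty depends on B).\<close>
definition Gam :: "nat \<Rightarrow> real \<Rightarrow> real \<Rightarrow> nat \<Rightarrow> nat \<Rightarrow> nat \<Rightarrow> nat \<Rightarrow> (tensor \<times> tensor) set" where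
  "Gam th b c n1 n2 n3 r = {(A,B). A \<in> LL th n1 r n3 \<and> B \<in> DD th b r n2 n3 \<and>
      (\<forall>(i,j,k) \<in> box n1 n2 n3. 0 \<le> tprod r n3 A B i j k \<and> tprod r n3 A B i j k \<le> c)}"

definition laplace_dens :: "real \<Rightarrow> real \<Rightarrow> real \<Rightarrow> real" where
  "laplace_dens \<tau> x y = exp (- \<bar>y - x\<bar> / \<tau>) / (2 * \<tau>)"

definition laplace_measure :: "real \<Rightarrow> real measure" where
  "laplace_measure \<tau> = density lborel (\<lambda>y. ennreal (laplace_dens \<tau> 0 y))"

definition objective :: "nat \<Rightarrow> nat \<Rightarrow> nat \<Rightarrow> nat \<Rightarrow> real \<Rightarrow> real \<Rightarrow>
    (nat \<times> nat \<times> nat) set \<Rightarrow> (nat \<times> nat \<times> nat \<Rightarrow> real) \<Rightarrow> tensor \<times> tensor \<Rightarrow> real" where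
  "objective n1 n2 n3 r \<tau> lam Om Y AB =
     (let X = tprod r n3 (fst AB) (snd AB) in
       - ln (\<Prod>(i,j,k) \<in> Om. laplace_dens \<tau> (X i j k) (Y (i,j,k)))
       + lam * real (l0norm r n2 n3 (snd AB)))"

definition beta_of :: "nat \<Rightarrow> nat \<Rightarrow> nat \<Rightarrow> nat \<Rightarrow> real \<Rightarrow> real \<Rightarrow> real" where
  "beta_of n1 n2 n3 r b c =
     max 3 (1 + ln (3 * real r * real n3 powr 1.5 * b / c) / ln (real (max n1 n2)))"

definition lam_of :: "nat \<Rightarrow> nat \<Rightarrow> real \<Rightarrow> real \<Rightarrow> real \<Rightarrow> real" where
  "lam_of n1 n2 \<beta> c \<tau> =
     (let \<kappa> = c^2 / (2 * \<tau>^2) in 4 * (\<beta> + 2) * (1 + 2 * \<kappa> / 3) * ln (real (max n1 n2)))"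

end

theory Submission
  imports Defs "HOL-Real_Asymp.Real_Asymp"
begin


lemma lap_dens_meas[measurable]: "laplace_dens \<tau> x \<in> borel_measurable borel"
  unfolding laplace_dens_def by measurable

lemma lap_nn:
  assumes "f \<in> borel_measurable borel"
  shows "(\<integral>\<^sup>+y. f y \<partial>laplace_measure \<tau>) = (\<integral>\<^sup>+y. ennreal (laplace_dens \<tau> 0 y) * f y \<partial>lborel)"
  unfolding laplace_measure_def using assms
  by (subst nn_integral_density) auto

lemma sets_lap[simp, measurable_cong]: "sets (laplace_measure \<tau>) = sets borel"
  unfolding laplace_measure_def by simp

lemma space_lap[simp]: "space (laplace_measure \<tau>) = UNIV"
  unfolding laplace_measure_def by simp

lemma lap_sym:
  assumes [measurable]: "f \<in> borel_measurable borel"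
  shows "(\<integral>\<^sup>+y. f y \<partial>laplace_measure \<tau>) = (\<integral>\<^sup>+y. f (- y) \<partial>laplace_measure \<tau>)"
proof -
  have m: "(\<lambda>y. ennreal (laplace_dens \<tau> 0 y) * f y) \<in> borel_measurable borel"
    unfolding laplace_dens_def by measurable
  have "(\<integral>\<^sup>+y. ennreal (laplace_dens \<tau> 0 y) * f y \<partial>lborel)
      = (\<integral>\<^sup>+y. ennreal (laplace_dens \<tau> 0 y) * f (- y) \<partial>lborel)"
    using nn_integral_real_affine[OF m, of "-1" 0] by (simp add: laplace_dens_def)
  then show ?thesis by (simp add: lap_nn)
qed

lemma lap_tail:
  assumes "\<tau> > 0" "d \<ge> 0"
  shows "emeasure (laplace_measure \<tau>) {d..} = ennreal (exp (- d / \<tau>) / 2)"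
proof -
  have "emeasure (laplace_measure \<tau>) {d..} = (\<integral>\<^sup>+y. ennreal (laplace_dens \<tau> 0 y) * indicator {d..} y \<partial>lborel)"
    unfolding laplace_measure_def by (subst emeasure_density) (auto intro!: nn_integral_cong)
  also have "\<dots> = (\<integral>\<^sup>+y. ennreal (exp (- y / \<tau>) / (2 * \<tau>)) * indicator {d..} y \<partial>lborel)"
    using assms by (intro nn_integral_cong) (auto simp: laplace_dens_def indicator_def)
  also have "\<dots> = ennreal (0 - (- exp (- d / \<tau>) / 2))"
  proof (rule nn_integral_FTC_atLeast)
    show "(\<lambda>x. exp (- x / \<tau>) / (2 * \<tau>)) \<in> borel_measurable borel" by measurable
    fix x assume "d \<le> x"
    show "((\<lambda>x. - exp (- x / \<tau>) / 2) has_real_derivative exp (- x / \<tau>) / (2 * \<tau>)) (at x)"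
      using assms by (auto intro!: derivative_eq_intros simp: field_simps)
    show "0 \<le> exp (- x / \<tau>) / (2 * \<tau>)" using assms by simp
  next
    show "((\<lambda>x. - exp (- x / \<tau>) / 2) \<longlongrightarrow> 0) at_top" using assms by real_asymp
  qed
  finally show ?thesis by simp
qed

lemma lap_emeasure_nn:
  assumes "A \<in> sets borel"
  shows "emeasure (laplace_measure \<tau>) A = (\<integral>\<^sup>+y. indicator A y \<partial>laplace_measure \<tau>)"
  using assms by (simp add: nn_integral_indicator)

lemma lap_low:
  assumes "\<tau> > 0" "d \<le> 0"
  shows "emeasure (laplace_measure \<tau>) {..d} = ennreal (exp (d / \<tau>) / 2)"
proof -
  have "emeasure (laplace_measure \<tau>) {..d} = (\<integral>\<^sup>+y. indicator {..d} y \<partial>laplace_measure \<tau>)"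
    by (rule lap_emeasure_nn) simp
  also have "\<dots> = (\<integral>\<^sup>+y. indicator {..d} (- y) \<partial>laplace_measure \<tau>)"
    by (rule lap_sym) measurable
  also have "\<dots> = (\<integral>\<^sup>+y. indicator {-d..} y \<partial>laplace_measure \<tau>)"
    by (intro nn_integral_cong) (auto simp: indicator_def)
  also have "\<dots> = emeasure (laplace_measure \<tau>) {-d..}"
    by (rule lap_emeasure_nn[symmetric]) simp
  also have "\<dots> = ennreal (exp (d / \<tau>) / 2)"
    using assms by (subst lap_tail) auto
  finally show ?thesis .
qed

lemma lap_singleton:
  "emeasure (laplace_measure \<tau>) {x} = 0"
proof -
  have N: "{x} \<in> null_sets lborel" by (auto intro: null_setsI)
  show ?thesis unfolding laplace_measure_def
    by (subst emeasure_density) (auto intro!: nn_integral_null_set[OF N])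
qed

lemma lap_total:
  assumes "\<tau> > 0"
  shows "emeasure (laplace_measure \<tau>) UNIV = 1"
proof -
  have u1: "{..0} \<union> {0<..} = (UNIV::real set)" by auto
  have u2: "{0<..} \<union> {0} = {0::real..}" by auto
  have "emeasure (laplace_measure \<tau>) UNIV = emeasure (laplace_measure \<tau>) {..0} + emeasure (laplace_measure \<tau>) {0<..}"
    by (subst plus_emeasure) (auto simp only: u1 sets_lap, auto)
  moreover have "emeasure (laplace_measure \<tau>) {0<..} + emeasure (laplace_measure \<tau>) {0} = emeasure (laplace_measure \<tau>) {0..}"
    by (subst plus_emeasure) (auto simp only: u2 sets_lap, auto)
  ultimately have "emeasure (laplace_measure \<tau>) UNIV = ennreal (1/2) + ennreal (1/2)"
    using assms lap_low[of \<tau> 0] lap_tail[of \<tau> 0] lap_singleton[of \<tau> 0] by simp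
  also have "\<dots> = ennreal (1/2 + 1/2)" by (rule ennreal_plus[symmetric]) auto
  also have "\<dots> = 1" by simp
  finally show ?thesis .
qed

lemma prob_space_lap: "\<tau> > 0 \<Longrightarrow> prob_space (laplace_measure \<tau>)"
  by (rule prob_spaceI) (simp add: lap_total)

lemma lap_low_open:
  assumes "\<tau> > 0" "d \<le> 0"
  shows "emeasure (laplace_measure \<tau>) {..<d} = ennreal (exp (d / \<tau>) / 2)"
proof -
  have u: "{..<d} \<union> {d} = {..d}" by auto
  have "emeasure (laplace_measure \<tau>) {..<d} + emeasure (laplace_measure \<tau>) {d} = emeasure (laplace_measure \<tau>) {..d}"
    by (subst plus_emeasure) (auto simp only: u sets_lap, auto)
  then show ?thesis using lap_low[OF assms] lap_singleton[of \<tau> d] by simp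
qed

lemma lap_set_eq:
  assumes "A \<in> sets borel"
  shows "(\<integral>\<^sup>+y. ennreal (laplace_dens \<tau> 0 y) * indicator A y \<partial>lborel) = emeasure (laplace_measure \<tau>) A"
  unfolding laplace_measure_def using assms by (subst emeasure_density) auto

lemma lap_affinity_pos:
  assumes "\<tau> > 0" "d \<ge> 0"
  shows "(\<integral>\<^sup>+y. ennreal (exp (- (\<bar>y - d\<bar> - \<bar>y\<bar>) / (2 * \<tau>))) \<partial>laplace_measure \<tau>)
         = ennreal (exp (- (d / (2 * \<tau>))) * (1 + d / (2 * \<tau>)))"
proof -
  define u where "u = d / (2 * \<tau>)"
  let ?D = "\<lambda>y. ennreal (laplace_dens \<tau> 0 y)"
  have eq: "?D y * ennreal (exp (- (\<bar>y - d\<bar> - \<bar>y\<bar>) / (2 * \<tau>)))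
     = ennreal (exp (- u)) * (?D y * indicator {..<0} y) + ennreal (exp (- u) / (2 * \<tau>)) * indicator {0..<d} y
       + ennreal (exp u) * (?D y * indicator {d..} y)" for y
  proof -
    consider "y < 0" | "0 \<le> y" "y < d" | "d \<le> y" by linarith
    then show ?thesis
    proof cases
      case 1
      then have "- (\<bar>y - d\<bar> - \<bar>y\<bar>) / (2 * \<tau>) = - u" using assms by (simp add: u_def field_simps)
      then show ?thesis using 1 assms by (simp add: indicator_def mult.commute)
    next
      case 2
      have "exp (- \<bar>y\<bar> / \<tau>) / (2 * \<tau>) * exp (- (\<bar>y - d\<bar> - \<bar>y\<bar>) / (2 * \<tau>))
           = exp (- \<bar>y\<bar> / \<tau> + - (\<bar>y - d\<bar> - \<bar>y\<bar>) / (2 * \<tau>)) / (2 * \<tau>)"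
        unfolding exp_add by simp
      also have "- \<bar>y\<bar> / \<tau> + - (\<bar>y - d\<bar> - \<bar>y\<bar>) / (2 * \<tau>) = - u"
        using 2 assms by (simp add: u_def field_simps)
      finally have "exp (- \<bar>y\<bar> / \<tau>) / (2 * \<tau>) * exp (- (\<bar>y - d\<bar> - \<bar>y\<bar>) / (2 * \<tau>)) = exp (- u) / (2 * \<tau>)" .
      then show ?thesis using 2 assms
        by (simp add: indicator_def laplace_dens_def ennreal_mult''[symmetric])
    next
      case 3
      then have "- (\<bar>y - d\<bar> - \<bar>y\<bar>) / (2 * \<tau>) = u" using assms by (simp add: u_def field_simps)
      then show ?thesis using 3 assms by (simp add: indicator_def mult.commute)
    qed
  qed
  have "(\<integral>\<^sup>+y. ennreal (exp (- (\<bar>y - d\<bar> - \<bar>y\<bar>) / (2 * \<tau>))) \<partial>laplace_measure \<tau>)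
     = (\<integral>\<^sup>+y. ?D y * ennreal (exp (- (\<bar>y - d\<bar> - \<bar>y\<bar>) / (2 * \<tau>))) \<partial>lborel)"
    by (rule lap_nn) measurable
  also have "\<dots> = (\<integral>\<^sup>+y. ennreal (exp (- u)) * (?D y * indicator {..<0} y) + ennreal (exp (- u) / (2 * \<tau>)) * indicator {0..<d} y
       + ennreal (exp u) * (?D y * indicator {d..} y) \<partial>lborel)"
    by (simp only: eq)
  also have "\<dots> = ennreal (exp (- u)) * (\<integral>\<^sup>+y. ?D y * indicator {..<0} y \<partial>lborel)
      + ennreal (exp (- u) / (2 * \<tau>)) * (\<integral>\<^sup>+y. indicator {0..<d} y \<partial>lborel)
      + ennreal (exp u) * (\<integral>\<^sup>+y. ?D y * indicator {d..} y \<partial>lborel)"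
    by (simp add: nn_integral_add nn_integral_cmult)
  also have "\<dots> = ennreal (exp (- u)) * ennreal (1/2) + ennreal (exp (- u) / (2 * \<tau>)) * ennreal d
      + ennreal (exp u) * ennreal (exp (- d / \<tau>) / 2)"
    using assms by (simp add: lap_set_eq lap_low_open lap_tail)
  also have "\<dots> = ennreal (exp (- u) * (1/2)) + ennreal (exp (- u) / (2 * \<tau>) * d) + ennreal (exp u * (exp (- d / \<tau>) / 2))"
  proof -
    have e1: "ennreal (exp (- u)) * ennreal (1/2) = ennreal (exp (- u) * (1/2))" by (rule ennreal_mult''[symmetric]) simp
    have e2: "ennreal (exp (- u) / (2 * \<tau>)) * ennreal d = ennreal (exp (- u) / (2 * \<tau>) * d)" by (rule ennreal_mult''[symmetric]) (use assms in simp)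
    have e3: "ennreal (exp u) * ennreal (exp (- d / \<tau>) / 2) = ennreal (exp u * (exp (- d / \<tau>) / 2))" by (rule ennreal_mult''[symmetric]) simp
    show ?thesis by (simp only: e1 e2 e3)
  qed
  also have "\<dots> = ennreal (exp (- u) * (1/2) + exp (- u) / (2 * \<tau>) * d + exp u * (exp (- d / \<tau>) / 2))"
  proof -
    have p1: "ennreal (exp (- u) * (1/2)) + ennreal (exp (- u) / (2 * \<tau>) * d) = ennreal (exp (- u) * (1/2) + exp (- u) / (2 * \<tau>) * d)"
      by (rule ennreal_plus[symmetric]) (use assms in simp_all)
    have p2: "ennreal (exp (- u) * (1/2) + exp (- u) / (2 * \<tau>) * d) + ennreal (exp u * (exp (- d / \<tau>) / 2))
       = ennreal (exp (- u) * (1/2) + exp (- u) / (2 * \<tau>) * d + exp u * (exp (- d / \<tau>) / 2))"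
      by (rule ennreal_plus[symmetric]) (use assms in simp_all)
    show ?thesis by (simp only: p1 p2)
  qed
  also have "exp u * (exp (- d / \<tau>) / 2) = exp (- u) / 2"
  proof -
    have "exp u * exp (- d / \<tau>) = exp (- u)" using assms
      by (simp add: exp_add[symmetric] u_def field_simps)
    then show ?thesis by simp
  qed
  also have "exp (- u) * (1/2) + exp (- u) / (2 * \<tau>) * d + exp (- u) / 2 = exp (- u) * (1 + u)"
    using assms by (simp add: u_def field_simps)
  finally show ?thesis by (simp add: u_def)
qed

lemma lap_affinity:
  assumes "\<tau> > 0"
  shows "(\<integral>\<^sup>+y. ennreal (exp (- (\<bar>y - d\<bar> - \<bar>y\<bar>) / (2 * \<tau>))) \<partial>laplace_measure \<tau>)
         = ennreal (exp (- (\<bar>d\<bar> / (2 * \<tau>))) * (1 + \<bar>d\<bar> / (2 * \<tau>)))"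
proof (cases "d \<ge> 0")
  case True
  then show ?thesis using lap_affinity_pos[OF assms True] by simp
next
  case False
  have "(\<integral>\<^sup>+y. ennreal (exp (- (\<bar>y - d\<bar> - \<bar>y\<bar>) / (2 * \<tau>))) \<partial>laplace_measure \<tau>)
      = (\<integral>\<^sup>+y. ennreal (exp (- (\<bar>(-y) - d\<bar> - \<bar>-y\<bar>) / (2 * \<tau>))) \<partial>laplace_measure \<tau>)"
    by (rule lap_sym) measurable
  also have "\<dots> = (\<integral>\<^sup>+y. ennreal (exp (- (\<bar>y - (-d)\<bar> - \<bar>y\<bar>) / (2 * \<tau>))) \<partial>laplace_measure \<tau>)"
    by (intro nn_integral_cong) (simp add: abs_minus_commute add.commute)
  also have "\<dots> = ennreal (exp (- (\<bar>d\<bar> / (2 * \<tau>))) * (1 + \<bar>d\<bar> / (2 * \<tau>)))"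
    using lap_affinity_pos[OF assms, of "-d"] False by simp
  finally show ?thesis .
qed

definition far :: "real \<Rightarrow> real set" where
  "far d = (if d \<ge> 0 then {d..} else {..d})"

lemma far_sets[measurable]: "far d \<in> sets borel"
  unfolding far_def by auto

lemma lap_far:
  assumes "\<tau> > 0"
  shows "emeasure (laplace_measure \<tau>) (far d) = ennreal (exp (- \<bar>d\<bar> / \<tau>) / 2)"
  using lap_tail[OF assms, of d] lap_low[OF assms, of d] by (auto simp: far_def)

lemma far_bound: "\<bar>y - d\<bar> - \<bar>y\<bar> \<le> \<bar>d\<bar> - 2 * \<bar>d\<bar> * indicator (far d) y"
  by (auto simp: far_def indicator_def)

lemma prob_Pe: "\<tau> > 0 \<Longrightarrow> prob_space (measure_pmf (bernoulli_pmf p) \<Otimes>\<^sub>M laplace_measure \<tau>)"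
  by (intro prob_space_pair prob_space_measure_pmf prob_space_lap)

lemma Pe_nn:
  assumes "0 \<le> p" "p \<le> 1" "\<tau> > 0"
    and f: "f \<in> borel_measurable (measure_pmf (bernoulli_pmf p) \<Otimes>\<^sub>M laplace_measure \<tau>)"
  shows "(\<integral>\<^sup>+z. f z \<partial>(measure_pmf (bernoulli_pmf p) \<Otimes>\<^sub>M laplace_measure \<tau>))
    = ennreal (1 - p) * (\<integral>\<^sup>+y. f (False, y) \<partial>laplace_measure \<tau>) + ennreal p * (\<integral>\<^sup>+y. f (True, y) \<partial>laplace_measure \<tau>)"
proof -
  interpret L: prob_space "laplace_measure \<tau>" by (rule prob_space_lap) fact
  have "(\<integral>\<^sup>+z. f z \<partial>(measure_pmf (bernoulli_pmf p) \<Otimes>\<^sub>M laplace_measure \<tau>))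
     = (\<integral>\<^sup>+x. \<integral>\<^sup>+y. f (x, y) \<partial>laplace_measure \<tau> \<partial>measure_pmf (bernoulli_pmf p))"
    by (rule L.nn_integral_fst[symmetric]) fact
  also have "\<dots> = (\<Sum>x\<in>UNIV. (\<integral>\<^sup>+y. f (x, y) \<partial>laplace_measure \<tau>) * pmf (bernoulli_pmf p) x)"
    by (rule nn_integral_measure_pmf_support) auto
  also have "\<dots> = ennreal (1 - p) * (\<integral>\<^sup>+y. f (False, y) \<partial>laplace_measure \<tau>) + ennreal p * (\<integral>\<^sup>+y. f (True, y) \<partial>laplace_measure \<tau>)"
    using assms by (simp add: UNIV_bool mult.commute add.commute)
  finally show ?thesis .
qed

definition ell :: "real \<Rightarrow> real \<Rightarrow> bool \<times> real \<Rightarrow> real" where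
  "ell \<tau> d z = (if fst z then (\<bar>snd z - d\<bar> - \<bar>snd z\<bar>) / \<tau> else 0)"

lemma ell_meas[measurable]: "ell \<tau> d \<in> borel_measurable (measure_pmf (bernoulli_pmf p) \<Otimes>\<^sub>M laplace_measure \<tau>')"
  unfolding ell_def by measurable

definition aff :: "real \<Rightarrow> real \<Rightarrow> real" where
  "aff \<tau> d = exp (- (\<bar>d\<bar> / (2 * \<tau>))) * (1 + \<bar>d\<bar> / (2 * \<tau>))"

lemma aff_le1: "\<tau> > 0 \<Longrightarrow> aff \<tau> d \<le> 1"
  unfolding aff_def using exp_ge_add_one_self[of "\<bar>d\<bar> / (2 * \<tau>)"]
  by (simp add: exp_minus field_simps)

lemma Pe_aff:
  assumes "0 \<le> p" "p \<le> 1" "\<tau> > 0"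
  shows "(\<integral>\<^sup>+z. ennreal (exp (- ell \<tau> d z / 2)) \<partial>(measure_pmf (bernoulli_pmf p) \<Otimes>\<^sub>M laplace_measure \<tau>))
     = ennreal (1 - p * (1 - aff \<tau> d))"
proof -
  have "(\<integral>\<^sup>+z. ennreal (exp (- ell \<tau> d z / 2)) \<partial>(measure_pmf (bernoulli_pmf p) \<Otimes>\<^sub>M laplace_measure \<tau>))
     = ennreal (1 - p) * (\<integral>\<^sup>+y. ennreal (exp (- ell \<tau> d (False, y) / 2)) \<partial>laplace_measure \<tau>)
       + ennreal p * (\<integral>\<^sup>+y. ennreal (exp (- ell \<tau> d (True, y) / 2)) \<partial>laplace_measure \<tau>)"
    using assms by (intro Pe_nn) auto
  also have "(\<integral>\<^sup>+y. ennreal (exp (- ell \<tau> d (False, y) / 2)) \<partial>laplace_measure \<tau>) = 1"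
    using prob_space.emeasure_space_1[OF prob_space_lap[OF assms(3)]] by (simp add: ell_def)
  also have "(\<integral>\<^sup>+y. ennreal (exp (- ell \<tau> d (True, y) / 2)) \<partial>laplace_measure \<tau>)
     = (\<integral>\<^sup>+y. ennreal (exp (- (\<bar>y - d\<bar> - \<bar>y\<bar>) / (2 * \<tau>))) \<partial>laplace_measure \<tau>)"
  proof (intro nn_integral_cong)
    fix y :: real
    have "- ((\<bar>y - d\<bar> - \<bar>y\<bar>) / \<tau>) / 2 = - (\<bar>y - d\<bar> - \<bar>y\<bar>) / (2 * \<tau>)" using assms(3) by (simp add: divide_simps)
    then show "ennreal (exp (- ell \<tau> d (True, y) / 2)) = ennreal (exp (- (\<bar>y - d\<bar> - \<bar>y\<bar>) / (2 * \<tau>)))"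
      by (simp only: ell_def fst_conv snd_conv if_True)
  qed
  also have "\<dots> = ennreal (aff \<tau> d)"
    using lap_affinity[OF assms(3)] by (simp add: aff_def)
  also have "ennreal (1 - p) * 1 + ennreal p * ennreal (aff \<tau> d) = ennreal (1 - p + p * aff \<tau> d)"
    using assms by (simp add: ennreal_mult''[symmetric] ennreal_plus[symmetric] aff_def del: ennreal_plus)
  finally show ?thesis by (simp add: algebra_simps)
qed

lemma KEY_g:
  fixes I :: "'i set" and d :: "'i \<Rightarrow> real"
  assumes "finite I" "0 \<le> p" "p \<le> 1" "\<tau> > 0"
  shows "(\<integral>\<^sup>+\<omega>. ennreal (\<Prod>e\<in>I. exp (- ell \<tau> (d e) (\<omega> e) / 2))
            \<partial>PiM I (\<lambda>_. measure_pmf (bernoulli_pmf p) \<Otimes>\<^sub>M laplace_measure \<tau>))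
         \<le> ennreal (exp (- (p * (\<Sum>e\<in>I. 1 - aff \<tau> (d e)))))"
proof -
  let ?P = "measure_pmf (bernoulli_pmf p) \<Otimes>\<^sub>M laplace_measure \<tau>"
  interpret PS: product_sigma_finite "\<lambda>_::'i. ?P"
    unfolding product_sigma_finite_def using prob_space_imp_sigma_finite[OF prob_Pe[OF assms(4)]] by simp
  have "(\<integral>\<^sup>+\<omega>. ennreal (\<Prod>e\<in>I. exp (- ell \<tau> (d e) (\<omega> e) / 2)) \<partial>PiM I (\<lambda>_. ?P))
      = (\<integral>\<^sup>+\<omega>. (\<Prod>e\<in>I. ennreal (exp (- ell \<tau> (d e) (\<omega> e) / 2))) \<partial>PiM I (\<lambda>_. ?P))"
    by (subst prod_ennreal) auto
  also have "\<dots> = (\<Prod>e\<in>I. \<integral>\<^sup>+z. ennreal (exp (- ell \<tau> (d e) z / 2)) \<partial>?P)"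
    by (rule PS.product_nn_integral_prod) (use assms in auto)
  also have "\<dots> = (\<Prod>e\<in>I. ennreal (1 - p * (1 - aff \<tau> (d e))))"
    by (intro prod.cong refl Pe_aff) (use assms in auto)
  also have "\<dots> = ennreal (\<Prod>e\<in>I. 1 - p * (1 - aff \<tau> (d e)))"
  proof (rule prod_ennreal)
    fix e
    have "p * (1 - aff \<tau> (d e)) \<le> 1 * 1"
      using assms aff_le1[OF assms(4), of "d e"] by (intro mult_mono) (auto simp: aff_def)
    then show "0 \<le> 1 - p * (1 - aff \<tau> (d e))" by simp
  qed
  also have "\<dots> \<le> ennreal (\<Prod>e\<in>I. exp (- (p * (1 - aff \<tau> (d e)))))"
  proof (intro ennreal_leI prod_mono conjI)
    fix e
    have "p * (1 - aff \<tau> (d e)) \<le> 1 * 1"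
      using assms aff_le1[OF assms(4), of "d e"] by (intro mult_mono) (auto simp: aff_def)
    then show "0 \<le> 1 - p * (1 - aff \<tau> (d e))" by simp
    show "1 - p * (1 - aff \<tau> (d e)) \<le> exp (- (p * (1 - aff \<tau> (d e))))"
      using exp_ge_add_one_self[of "- (p * (1 - aff \<tau> (d e)))"] by simp
  qed
  also have "(\<Prod>e\<in>I. exp (- (p * (1 - aff \<tau> (d e))))) = exp (- (p * (\<Sum>e\<in>I. 1 - aff \<tau> (d e))))"
    using assms by (simp add: exp_sum[symmetric] sum_negf sum_distrib_left)
  finally show ?thesis .
qed

lemma KEY_S:
  fixes I :: "'i set" and G :: "'g set" and d :: "'g \<Rightarrow> 'i \<Rightarrow> real" and pen :: "'g \<Rightarrow> real"
  assumes "finite I" "finite G" "0 \<le> p" "p \<le> 1" "\<tau> > 0" "(\<Sum>g\<in>G. exp (- pen g)) \<le> 1"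
  shows "(\<integral>\<^sup>+\<omega>. ennreal (\<Sum>g\<in>G. exp (p * (\<Sum>e\<in>I. 1 - aff \<tau> (d g e)) - pen g
             - (\<Sum>e\<in>I. ell \<tau> (d g e) (\<omega> e)) / 2))
            \<partial>PiM I (\<lambda>_. measure_pmf (bernoulli_pmf p) \<Otimes>\<^sub>M laplace_measure \<tau>)) \<le> 1"
proof -
  let ?P = "measure_pmf (bernoulli_pmf p) \<Otimes>\<^sub>M laplace_measure \<tau>"
  let ?M = "PiM I (\<lambda>_. ?P)"
  let ?c = "\<lambda>g. p * (\<Sum>e\<in>I. 1 - aff \<tau> (d g e)) - pen g"
  have eq: "exp (?c g - (\<Sum>e\<in>I. ell \<tau> (d g e) (\<omega> e)) / 2)
      = exp (?c g) * (\<Prod>e\<in>I. exp (- ell \<tau> (d g e) (\<omega> e) / 2))" for g \<omega>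
  proof -
    have "(\<Sum>e\<in>I. - ell \<tau> (d g e) (\<omega> e) / 2) = - (\<Sum>e\<in>I. ell \<tau> (d g e) (\<omega> e)) / 2"
      by (simp add: sum_divide_distrib sum_negf)
    then have "exp (?c g - (\<Sum>e\<in>I. ell \<tau> (d g e) (\<omega> e)) / 2) = exp (?c g + (\<Sum>e\<in>I. - ell \<tau> (d g e) (\<omega> e) / 2))"
      by simp
    also have "\<dots> = exp (?c g) * (\<Prod>e\<in>I. exp (- ell \<tau> (d g e) (\<omega> e) / 2))"
      by (simp only: exp_add exp_sum[OF assms(1)])
    finally show ?thesis .
  qed
  have meas: "(\<lambda>\<omega>. ennreal (\<Prod>e\<in>I. exp (- ell \<tau> (d g e) (\<omega> e) / 2))) \<in> borel_measurable ?M" for g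
  proof (intro measurable_compose[OF _ measurable_ennreal] borel_measurable_prod)
    fix e assume "e \<in> I"
    have m: "(\<lambda>z. exp (- ell \<tau> (d g e) z / 2)) \<in> borel_measurable ?P" by measurable
    show "(\<lambda>\<omega>. exp (- ell \<tau> (d g e) (\<omega> e) / 2)) \<in> borel_measurable ?M"
      by (rule measurable_compose[OF measurable_component_singleton[OF \<open>e \<in> I\<close>] m])
  qed
  have "(\<integral>\<^sup>+\<omega>. ennreal (\<Sum>g\<in>G. exp (?c g - (\<Sum>e\<in>I. ell \<tau> (d g e) (\<omega> e)) / 2)) \<partial>?M)
     = (\<integral>\<^sup>+\<omega>. (\<Sum>g\<in>G. ennreal (exp (?c g)) * ennreal (\<Prod>e\<in>I. exp (- ell \<tau> (d g e) (\<omega> e) / 2))) \<partial>?M)"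
    by (subst sum_ennreal[symmetric]) (auto simp: eq ennreal_mult'' prod_nonneg)
  also have "\<dots> = (\<Sum>g\<in>G. ennreal (exp (?c g)) * (\<integral>\<^sup>+\<omega>. ennreal (\<Prod>e\<in>I. exp (- ell \<tau> (d g e) (\<omega> e) / 2)) \<partial>?M))"
    using meas by (subst nn_integral_sum) (auto simp: nn_integral_cmult)
  also have "\<dots> \<le> (\<Sum>g\<in>G. ennreal (exp (?c g)) * ennreal (exp (- (p * (\<Sum>e\<in>I. 1 - aff \<tau> (d g e))))))"
    by (intro sum_mono mult_left_mono KEY_g) (use assms in auto)
  also have "\<dots> = (\<Sum>g\<in>G. ennreal (exp (- pen g)))"
    by (intro sum.cong refl) (simp add: ennreal_mult''[symmetric] exp_add[symmetric])
  also have "\<dots> = ennreal (\<Sum>g\<in>G. exp (- pen g))" by simp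
  also have "\<dots> \<le> 1" using assms(6) by simp
  finally show ?thesis .
qed

lemma comp_int:
  fixes f :: "bool \<times> real \<Rightarrow> real" and I :: "'i set"
  assumes "e \<in> I" "\<tau> > 0" "f \<in> borel_measurable (measure_pmf (bernoulli_pmf p) \<Otimes>\<^sub>M laplace_measure \<tau>)"
    "integrable (measure_pmf (bernoulli_pmf p) \<Otimes>\<^sub>M laplace_measure \<tau>) f"
  shows "integrable (PiM I (\<lambda>_. measure_pmf (bernoulli_pmf p) \<Otimes>\<^sub>M laplace_measure \<tau>)) (\<lambda>\<omega>. f (\<omega> e))"
    "(\<integral>\<omega>. f (\<omega> e) \<partial>PiM I (\<lambda>_. measure_pmf (bernoulli_pmf p) \<Otimes>\<^sub>M laplace_measure \<tau>))
       = (\<integral>z. f z \<partial>(measure_pmf (bernoulli_pmf p) \<Otimes>\<^sub>M laplace_measure \<tau>))"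
proof -
  let ?P = "measure_pmf (bernoulli_pmf p) \<Otimes>\<^sub>M laplace_measure \<tau>"
  let ?M = "PiM I (\<lambda>_. ?P)"
  have D: "distr ?M ?P (\<lambda>\<omega>. \<omega> e) = ?P"
    by (rule distr_PiM_component) (use assms prob_Pe in auto)
  have m: "(\<lambda>\<omega>. \<omega> e) \<in> measurable ?M ?P"
    by (rule measurable_component_singleton) fact
  show "integrable ?M (\<lambda>\<omega>. f (\<omega> e))"
    using integrable_distr_eq[OF m assms(3)] D assms(4) by simp
  show "(\<integral>\<omega>. f (\<omega> e) \<partial>?M) = (\<integral>z. f z \<partial>?P)"
    using integral_distr[OF m assms(3)] D by simp
qed

lemma Pe_True:
  assumes "0 \<le> p" "p \<le> 1" "\<tau> > 0" "A \<in> sets borel"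
  shows "measure (measure_pmf (bernoulli_pmf p) \<Otimes>\<^sub>M laplace_measure \<tau>) ({True} \<times> A) = p * measure (laplace_measure \<tau>) A"
proof -
  let ?P = "measure_pmf (bernoulli_pmf p) \<Otimes>\<^sub>M laplace_measure \<tau>"
  interpret L: prob_space "laplace_measure \<tau>" by (rule prob_space_lap) fact
  have "emeasure ?P ({True} \<times> A) = (\<integral>\<^sup>+z. indicator ({True} \<times> A) z \<partial>?P)"
    using assms by (subst nn_integral_indicator) auto
  also have "\<dots> = ennreal (1 - p) * (\<integral>\<^sup>+y. indicator ({True} \<times> A) (False, y) \<partial>laplace_measure \<tau>)
       + ennreal p * (\<integral>\<^sup>+y. indicator ({True} \<times> A) (True, y) \<partial>laplace_measure \<tau>)"
    using assms by (intro Pe_nn) auto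
  also have "\<dots> = ennreal p * (\<integral>\<^sup>+y. indicator A y \<partial>laplace_measure \<tau>)"
    by (simp add: indicator_def)
  also have "\<dots> = ennreal p * emeasure (laplace_measure \<tau>) A"
    using assms by (subst nn_integral_indicator) auto
  also have "\<dots> = ennreal (p * measure (laplace_measure \<tau>) A)"
    using assms by (simp add: L.emeasure_eq_measure ennreal_mult)
  finally show ?thesis using assms by (simp add: measure_def)
qed

lemma KEY_L:
  fixes I :: "'i set" and d :: "'i \<Rightarrow> real"
  assumes "finite I" "0 \<le> p" "p \<le> 1" "\<tau> > 0"
  defines "Lb \<equiv> \<lambda>\<omega>. \<Sum>e\<in>I. \<bar>d e\<bar> / \<tau> * (indicator ({True} \<times> UNIV) (\<omega> e) - 2 * indicator ({True} \<times> far (d e)) (\<omega> e))"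
  shows "\<And>\<omega>. (\<Sum>e\<in>I. ell \<tau> (d e) (\<omega> e)) \<le> Lb \<omega>"
    and "integrable (PiM I (\<lambda>_. measure_pmf (bernoulli_pmf p) \<Otimes>\<^sub>M laplace_measure \<tau>)) Lb"
    and "(\<integral>\<omega>. Lb \<omega> \<partial>PiM I (\<lambda>_. measure_pmf (bernoulli_pmf p) \<Otimes>\<^sub>M laplace_measure \<tau>)) \<le> (\<Sum>e\<in>I. p * (d e)^2 / \<tau>^2)"
proof -
  let ?P = "measure_pmf (bernoulli_pmf p) \<Otimes>\<^sub>M laplace_measure \<tau>"
  let ?M = "PiM I (\<lambda>_. ?P)"
  interpret P: prob_space ?P by (rule prob_Pe) fact
  interpret L: prob_space "laplace_measure \<tau>" by (rule prob_space_lap) fact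
  fix \<omega> :: "'i \<Rightarrow> bool \<times> real"
  show "(\<Sum>e\<in>I. ell \<tau> (d e) (\<omega> e)) \<le> Lb \<omega>"
    unfolding Lb_def
  proof (rule sum_mono)
    fix e
    show "ell \<tau> (d e) (\<omega> e) \<le> \<bar>d e\<bar> / \<tau> * (indicator ({True} \<times> UNIV) (\<omega> e) - 2 * indicator ({True} \<times> far (d e)) (\<omega> e))"
    proof (cases "fst (\<omega> e)")
      case True
      have "(\<bar>snd (\<omega> e) - d e\<bar> - \<bar>snd (\<omega> e)\<bar>) / \<tau> \<le> (\<bar>d e\<bar> - 2 * \<bar>d e\<bar> * indicator (far (d e)) (snd (\<omega> e))) / \<tau>"
        using far_bound assms(4) by (intro divide_right_mono) auto
      then show ?thesis using True
        by (cases "\<omega> e") (auto simp: ell_def indicator_def field_simps)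
    next
      case False
      then show ?thesis by (cases "\<omega> e") (auto simp: ell_def indicator_def)
    qed
  qed
next
  let ?P = "measure_pmf (bernoulli_pmf p) \<Otimes>\<^sub>M laplace_measure \<tau>"
  let ?M = "PiM I (\<lambda>_. ?P)"
  interpret P: prob_space ?P by (rule prob_Pe) fact
  interpret L: prob_space "laplace_measure \<tau>" by (rule prob_space_lap) fact
  let ?f = "\<lambda>e z. \<bar>d e\<bar> / \<tau> * (indicator ({True} \<times> UNIV) z - 2 * indicator ({True} \<times> far (d e)) z) :: real"
  have fm: "?f e \<in> borel_measurable ?P" for e by measurable
  have ii: "integrable ?P (indicator ({True} \<times> S) :: _ \<Rightarrow> real)" if "S \<in> sets borel" for S
    using that by (intro integrable_real_indicator) (auto simp: P.emeasure_finite less_top[symmetric])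
  have fi: "integrable ?P (?f e)" for e
  proof -
    have "integrable ?P (\<lambda>z. indicator ({True} \<times> UNIV) z - 2 * indicator ({True} \<times> far (d e)) z :: real)"
    proof (rule Bochner_Integration.integrable_diff)
      show "integrable ?P (indicator ({True} \<times> UNIV) :: _ \<Rightarrow> real)" by (rule ii) simp
      show "integrable ?P (\<lambda>z. 2 * indicator ({True} \<times> far (d e)) z :: real)"
        by (rule integrable_mult_right, rule ii) simp
    qed
    then show ?thesis by (rule integrable_mult_right)
  qed
  have "integrable ?M (\<lambda>\<omega>. ?f e (\<omega> e))" if "e \<in> I" for e
    by (rule comp_int(1)[OF that assms(4) fm fi])
  then show "integrable ?M Lb" unfolding Lb_def by (intro Bochner_Integration.integrable_sum) auto
  have "(\<integral>\<omega>. Lb \<omega> \<partial>?M) = (\<Sum>e\<in>I. \<integral>\<omega>. ?f e (\<omega> e) \<partial>?M)"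
    unfolding Lb_def using \<open>\<And>e. e \<in> I \<Longrightarrow> integrable ?M (\<lambda>\<omega>. ?f e (\<omega> e))\<close>
    by (intro Bochner_Integration.integral_sum) auto
  also have "\<dots> = (\<Sum>e\<in>I. \<integral>z. ?f e z \<partial>?P)"
    by (intro sum.cong refl comp_int(2)[OF _ assms(4) fm fi])
  also have "\<dots> = (\<Sum>e\<in>I. \<bar>d e\<bar> / \<tau> * (p * 1 - 2 * (p * (exp (- \<bar>d e\<bar> / \<tau>) / 2))))"
  proof (intro sum.cong refl)
    fix e
    have m1: "measure ?P ({True} \<times> UNIV) = p * 1"
      using Pe_True[OF assms(2,3,4), of UNIV] L.prob_space by simp
    have m2: "measure ?P ({True} \<times> far (d e)) = p * (exp (- \<bar>d e\<bar> / \<tau>) / 2)"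
      using Pe_True[OF assms(2,3,4), of "far (d e)"] lap_far[OF assms(4), of "d e"]
      by (simp add: L.emeasure_eq_measure)
    have "(\<integral>z. ?f e z \<partial>?P) = \<bar>d e\<bar> / \<tau> * (measure ?P ({True} \<times> UNIV) - 2 * measure ?P ({True} \<times> far (d e)))"
      apply (subst integral_mult_right_zero)
      apply (subst Bochner_Integration.integral_diff)
        apply (rule ii; simp)
       apply (rule integrable_mult_right, rule ii; simp)
      apply (subst integral_mult_right_zero)
      apply (simp add: space_pair_measure)
      done
    then show "(\<integral>z. ?f e z \<partial>?P) = \<bar>d e\<bar> / \<tau> * (p * 1 - 2 * (p * (exp (- \<bar>d e\<bar> / \<tau>) / 2)))"
      by (simp only: m1 m2)
  qed
  also have "\<dots> \<le> (\<Sum>e\<in>I. p * (d e)^2 / \<tau>^2)"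
  proof (intro sum_mono)
    fix e
    have "1 - exp (- \<bar>d e\<bar> / \<tau>) \<le> \<bar>d e\<bar> / \<tau>"
      using exp_ge_add_one_self[of "- \<bar>d e\<bar> / \<tau>"] by simp
    then have "\<bar>d e\<bar> / \<tau> * (p * (1 - exp (- \<bar>d e\<bar> / \<tau>))) \<le> \<bar>d e\<bar> / \<tau> * (p * (\<bar>d e\<bar> / \<tau>))"
      using assms by (intro mult_left_mono) auto
    then show "\<bar>d e\<bar> / \<tau> * (p * 1 - 2 * (p * (exp (- \<bar>d e\<bar> / \<tau>) / 2))) \<le> p * (d e)^2 / \<tau>^2"
      by (simp add: algebra_simps power2_eq_square)
  qed
  finally show "(\<integral>\<omega>. Lb \<omega> \<partial>?M) \<le> (\<Sum>e\<in>I. p * (d e)^2 / \<tau>^2)" .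
qed



lemma aff_poly:
  fixes u :: real assumes "u \<ge> 0"
  shows "exp (- u) * (1 + u) \<le> 1 - u^2 / (2 * (1 + u)^2)"
proof -
  have q: "1 + u + u^2 / 2 \<le> exp u" using exp_lower_Taylor_quadratic[OF assms] .
  have pos: "0 < 2 * (1 + u)^2 - u^2" using assms by (simp add: power2_eq_square algebra_simps) (smt (verit) mult_nonneg_nonneg assms)
  have poly: "(1 + u) * (2 * (1 + u)^2) \<le> (1 + u + u^2 / 2) * (2 * (1 + u)^2 - u^2)"
  proof -
    have "(1 + u + u^2 / 2) * (2 * (1 + u)^2 - u^2) - (1 + u) * (2 * (1 + u)^2) = u^3 + u^4 / 2"
      by (simp add: power2_eq_square power3_eq_cube power4_eq_xxxx algebra_simps)
    moreover have "0 \<le> u^3 + u^4 / 2" using assms by simp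
    ultimately show ?thesis by linarith
  qed
  also have "\<dots> \<le> exp u * (2 * (1 + u)^2 - u^2)"
    using q pos by (intro mult_right_mono) auto
  finally have "(1 + u) * (2 * (1 + u)^2) \<le> exp u * (2 * (1 + u)^2 - u^2)" .
  then have "(1 + u) \<le> exp u * (1 - u^2 / (2 * (1 + u)^2))"
    using assms by (simp add: field_simps)
  then show ?thesis by (simp add: exp_minus field_simps)
qed

lemma aff_bound:
  assumes "\<tau> > 0" "\<bar>d\<bar> \<le> c"
  shows "d^2 / (2 * (2 * \<tau> + c)^2) \<le> 1 - aff \<tau> d"
proof -
  define u where "u = \<bar>d\<bar> / (2 * \<tau>)"
  have u0: "u \<ge> 0" using assms by (simp add: u_def)
  have "u^2 / (2 * (1 + u)^2) = d^2 / (2 * (2 * \<tau> + \<bar>d\<bar>)^2)"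
    using assms by (simp add: u_def field_simps power2_eq_square)
  moreover have "d^2 / (2 * (2 * \<tau> + c)^2) \<le> d^2 / (2 * (2 * \<tau> + \<bar>d\<bar>)^2)"
    using assms by (intro divide_left_mono mult_left_mono power_mono) auto
  moreover have "aff \<tau> d \<le> 1 - u^2 / (2 * (1 + u)^2)"
    using aff_poly[OF u0] by (simp add: aff_def u_def)
  ultimately show ?thesis by linarith
qed



lemma prod_w:
  fixes I :: "'i set" and bb :: "'i \<Rightarrow> real"
  assumes "finite I"
  shows "(\<Prod>e\<in>I. (if bb e = 0 then 1 else exp (- h))) = exp (- h * real (card {e\<in>I. bb e \<noteq> 0}))"
proof -
  have "(\<Prod>e\<in>I. (if bb e = 0 then 1 else exp (- h))) = (\<Prod>e\<in>{e\<in>I. bb e \<noteq> 0}. exp (- h))"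
    using assms by (intro prod.mono_neutral_cong_right) auto
  also have "\<dots> = exp (- h) ^ card {e\<in>I. bb e \<noteq> 0}" by simp
  also have "\<dots> = exp (- h * real (card {e\<in>I. bb e \<noteq> 0}))"
    by (simp add: exp_of_nat_mult[symmetric] mult.commute)
  finally show ?thesis .
qed

lemma kraft:
  fixes GA :: "'a set" and I :: "'i set" and V :: "real set" and T :: real
  assumes "finite GA" "GA \<noteq> {}" "finite I" "finite V" "0 \<in> V" "real (card (V - {0})) \<le> T" "h \<ge> 0"
  shows "(\<Sum>g\<in>GA \<times> PiE I (\<lambda>_. V). exp (- (ln (real (card GA)) + real (card I) * ln (1 + T * exp (- h))
            + h * real (card {e\<in>I. snd g e \<noteq> 0})))) \<le> 1"
proof -
  define W where "W = 1 + T * exp (- h)"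
  have T0: "T \<ge> 0" using assms(6) of_nat_0_le_iff order_trans by blast
  have W1: "W \<ge> 1" using T0 by (simp add: W_def)
  have cA: "real (card GA) > 0" using assms by (simp add: card_gt_0_iff)
  have inner: "(\<Sum>bb\<in>PiE I (\<lambda>_. V). exp (- h * real (card {e\<in>I. bb e \<noteq> 0}))) \<le> W ^ card I"
  proof -
    have "(\<Sum>bb\<in>PiE I (\<lambda>_. V). exp (- h * real (card {e\<in>I. bb e \<noteq> 0})))
        = (\<Sum>bb\<in>PiE I (\<lambda>_. V). \<Prod>e\<in>I. (if bb e = 0 then 1 else exp (- h)))"
      using assms by (simp add: prod_w)
    also have "\<dots> = (\<Prod>e\<in>I. \<Sum>v\<in>V. (if v = 0 then 1 else exp (- h)))"
      by (rule prod_sum_PiE[symmetric]) (use assms in auto)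
    also have "\<dots> \<le> (\<Prod>e\<in>I. W)"
    proof (intro prod_mono conjI)
      fix e
      show "0 \<le> (\<Sum>v\<in>V. (if v = 0 then 1 else exp (- h)))" by (intro sum_nonneg) auto
      have "(\<Sum>v\<in>V. (if v = 0 then 1 else exp (- h))) = (\<Sum>v\<in>insert 0 (V - {0}). (if v = 0 then 1 else exp (- h)))"
        using assms by (simp add: insert_absorb)
      also have "\<dots> = 1 + (\<Sum>v\<in>V - {0}. (if v = 0 then 1 else exp (- h)))"
        using assms by (subst sum.insert) auto
      also have "(\<Sum>v\<in>V - {0}. (if v = (0::real) then 1 else exp (- h))) = real (card (V - {0})) * exp (- h)"
        by simp
      also have "\<dots> \<le> T * exp (- h)"
        using assms by (intro mult_right_mono) auto
      finally show "(\<Sum>v\<in>V. (if v = 0 then 1 else exp (- h))) \<le> W" by (simp add: W_def)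
    qed
    also have "\<dots> = W ^ card I" by simp
    finally show ?thesis .
  qed
  have "(\<Sum>g\<in>GA \<times> PiE I (\<lambda>_. V). exp (- (ln (real (card GA)) + real (card I) * ln W
            + h * real (card {e\<in>I. snd g e \<noteq> 0}))))
      = (\<Sum>a\<in>GA. \<Sum>bb\<in>PiE I (\<lambda>_. V). exp (- (ln (real (card GA)) + real (card I) * ln W))
            * exp (- h * real (card {e\<in>I. bb e \<noteq> 0})))"
    unfolding sum.cartesian_product
    by (intro sum.cong refl) (auto simp: exp_add[symmetric] algebra_simps split: prod.splits)
  also have "\<dots> = real (card GA) * (exp (- (ln (real (card GA)) + real (card I) * ln W))
            * (\<Sum>bb\<in>PiE I (\<lambda>_. V). exp (- h * real (card {e\<in>I. bb e \<noteq> 0}))))"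
    by (simp add: sum_distrib_left)
  also have "\<dots> \<le> real (card GA) * (exp (- (ln (real (card GA)) + real (card I) * ln W)) * W ^ card I)"
    by (intro mult_left_mono inner) auto
  also have "\<dots> = 1"
  proof -
    have e: "exp (- (ln (real (card GA)) + real (card I) * ln W)) = 1 / (real (card GA) * W ^ card I)"
    proof -
      have a: "exp (ln (real (card GA))) = real (card GA)" using cA by simp
      have b: "exp (real (card I) * ln W) = W ^ card I" using W1 by (simp add: exp_of_nat_mult)
      have "exp (- (ln (real (card GA)) + real (card I) * ln W)) = 1 / (exp (ln (real (card GA))) * exp (real (card I) * ln W))"
        by (simp only: exp_minus exp_add inverse_eq_divide)
      then show ?thesis by (simp only: a b)
    qed
    show ?thesis unfolding e using cA W1 by simp
  qed
  finally show ?thesis by (simp add: W_def)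
qed



definition quant :: "real \<Rightarrow> nat \<Rightarrow> real \<Rightarrow> real" where
  "quant u th x = u * real (nat \<lfloor>x * real (th - 1) / u\<rfloor>) / real (th - 1)"

lemma quant_props:
  assumes "u > 0" "th \<ge> 2" "0 \<le> x" "x \<le> u"
  shows "quant u th x \<in> levels th u" "0 \<le> quant u th x" "quant u th x \<le> x"
    "x - quant u th x \<le> u / real (th - 1)" "x = 0 \<Longrightarrow> quant u th x = 0"
proof -
  define T where "T = real (th - 1)"
  have T1: "T \<ge> 1" using assms by (simp add: T_def)
  define y where "y = x * T / u"
  have y0: "0 \<le> y" using assms T1 by (simp add: y_def)
  have yT: "y \<le> T" using assms T1 by (simp add: y_def field_simps mult_right_mono)
  define t where "t = nat \<lfloor>y\<rfloor>"
  have tle: "real t \<le> y" using y0 by (simp add: t_def)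
  have tgt: "y - 1 < real t" using y0 by (simp add: t_def)
  have q: "quant u th x = u * real t / T" by (simp add: quant_def t_def y_def T_def)
  have "real t \<le> T" using tle yT by linarith
  then have "t < th" using assms by (simp add: T_def)
  then show "quant u th x \<in> levels th u" unfolding levels_def q T_def by blast
  show "0 \<le> quant u th x" using q assms T1 by simp
  have "u * real t / T \<le> u * y / T" using tle assms T1 by (intro divide_right_mono mult_left_mono) auto
  also have "u * y / T = x" using assms T1 by (simp add: y_def)
  finally show "quant u th x \<le> x" using q by simp
  have "u * (y - 1) / T \<le> u * real t / T" using tgt assms T1 by (intro divide_right_mono mult_left_mono) auto
  moreover have "u * (y - 1) / T = x - u / T" using assms T1 by (simp add: y_def field_simps)
  ultimately show "x - quant u th x \<le> u / real (th - 1)" using q by (simp add: T_def)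
  show "x = 0 \<Longrightarrow> quant u th x = 0" by (simp add: quant_def)
qed

lemma term_bound:
  fixes a a' bb bb' ea eb b :: real
  assumes "0 \<le> a'" "a' \<le> a" "a \<le> 1" "0 \<le> bb'" "bb' \<le> bb" "bb \<le> b" "a - a' \<le> ea" "bb - bb' \<le> eb"
  shows "0 \<le> a' * bb'" "a' * bb' \<le> a * bb" "a * bb - a' * bb' \<le> ea * b + eb"
proof -
  show "0 \<le> a' * bb'" using assms by simp
  show "a' * bb' \<le> a * bb" using assms by (intro mult_mono) auto
  have "a * bb - a' * bb' = (a - a') * bb + a' * (bb - bb')" by (simp add: algebra_simps)
  also have "(a - a') * bb \<le> ea * b" using assms by (intro mult_mono) auto
  also have "a' * (bb - bb') \<le> 1 * eb" using assms by (intro mult_mono) auto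
  finally show "a * bb - a' * bb' \<le> ea * b + eb" by simp
qed

lemma tprod_approx:
  fixes A A' B B' :: tensor
  assumes "n3 > 0"
    and hA: "\<And>l k. l < r \<Longrightarrow> k < n3 \<Longrightarrow> 0 \<le> A' i l k \<and> A' i l k \<le> A i l k \<and> A i l k \<le> 1 \<and> A i l k - A' i l k \<le> ea"
    and hB: "\<And>l k. l < r \<Longrightarrow> k < n3 \<Longrightarrow> 0 \<le> B' l j k \<and> B' l j k \<le> B l j k \<and> B l j k \<le> b \<and> B l j k - B' l j k \<le> eb"
  shows "0 \<le> tprod r n3 A' B' i j k" "tprod r n3 A' B' i j k \<le> tprod r n3 A B i j k"
    "tprod r n3 A B i j k - tprod r n3 A' B' i j k \<le> real n3 * real r * (ea * b + eb)"
proof -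
  let ?a = "\<lambda>q l. A i l ((k + n3 - q) mod n3)" and ?a' = "\<lambda>q l. A' i l ((k + n3 - q) mod n3)"
  have T: "0 \<le> ?a' q l * B' l j q \<and> ?a' q l * B' l j q \<le> ?a q l * B l j q \<and>
      ?a q l * B l j q - ?a' q l * B' l j q \<le> ea * b + eb" if "q < n3" "l < r" for q l
  proof -
    have m: "(k + n3 - q) mod n3 < n3" using assms(1) by simp
    show ?thesis using term_bound[of "?a' q l" "?a q l" "B' l j q" "B l j q" b ea eb]
      hA[OF that(2) m] hB[OF that(2) that(1)] by auto
  qed
  show "0 \<le> tprod r n3 A' B' i j k" unfolding tprod_def
    using T by (intro sum_nonneg) auto
  show "tprod r n3 A' B' i j k \<le> tprod r n3 A B i j k" unfolding tprod_def
    using T by (intro sum_mono) auto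
  have "tprod r n3 A B i j k - tprod r n3 A' B' i j k = (\<Sum>q<n3. \<Sum>l<r. ?a q l * B l j q - ?a' q l * B' l j q)"
    unfolding tprod_def by (simp add: sum_subtractf)
  also have "\<dots> \<le> (\<Sum>q<n3. \<Sum>l<r. ea * b + eb)"
    using T by (intro sum_mono) auto
  also have "\<dots> = real n3 * real r * (ea * b + eb)" by simp
  finally show "tprod r n3 A B i j k - tprod r n3 A' B' i j k \<le> real n3 * real r * (ea * b + eb)" .
qed



lemma ln2_ge: "17/36 \<le> ln (2::real)"
proof -
  have a: "1/2 - (1/2)^2 \<le> ln (1 + 1/2::real)" by (rule ln_one_plus_pos_lower_bound) auto
  have b: "1/3 - (1/3)^2 \<le> ln (1 + 1/3::real)" by (rule ln_one_plus_pos_lower_bound) auto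
  have "ln (2::real) = ln (1 + 1/2) + ln (1 + 1/3)" using ln_mult[of "3/2::real" "4/3"] by simp
  then show ?thesis using a b by (simp add: power2_eq_square)
qed

lemma arith_final:
  fixes n1 n2 n3 r m b c \<tau> \<beta> \<theta> s1 s2 :: real
  assumes n1: "n1 \<ge> 2" and n2: "n2 \<ge> 2" and n3: "n3 \<ge> 2" and r: "r \<ge> 1" and b: "b > 0" and c: "c > 0" and \<tau>: "\<tau> > 0"
    and m4: "m \<ge> 4" and mN: "m \<le> n1 * n2 * n3"
    and \<beta>3: "\<beta> \<ge> 3" and \<beta>q: "\<beta> \<ge> 1 + ln (3 * r * n3 powr 1.5 * b / c) / ln (max n1 n2)"
    and \<theta>lo: "max n1 n2 powr \<beta> \<le> \<theta>" and \<theta>hi: "\<theta> \<le> 2 * max n1 n2 powr \<beta>"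
    and s: "0 \<le> s1" "s1 \<le> s2"
  defines "L \<equiv> ln (max n1 n2)"
    and "lam \<equiv> 4 * (\<beta> + 2) * (1 + 2 * (c^2 / (2 * \<tau>^2)) / 3) * ln (max n1 n2)"
    and "\<delta>0 \<equiv> 2 * r * n3 * b / (\<theta> - 1)"
  shows "m * \<delta>0^2 / (2 * \<tau>^2) + lam * s1 / 2 + r * n1 * n3 * ln \<theta> + r * n2 * n3 * \<theta> * exp (- lam / 2)
     \<le> 3 * c^2 / (2 * \<tau>^2) * ln m + (3 + c^2 / \<tau>^2) * (\<beta> + 2) * (r * n1 * n3 + s2) * L"
proof -
  define n where "n = max n1 n2"
  define t where "t = c^2 / \<tau>^2"
  have t0: "t \<ge> 0" by (simp add: t_def)
  have n2': "n \<ge> 2" using n1 by (simp add: n_def)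
  have Ln: "L = ln n" by (simp add: L_def n_def)
  have L0: "L \<ge> 17/36"
  proof -
    have "ln 2 \<le> ln n" using n2' by simp
    then show ?thesis using ln2_ge by (simp add: Ln)
  qed
  have nb: "n powr \<beta> \<ge> n ^ 3"
  proof -
    have "n ^ 3 = n powr 3" using n2' by (simp add: powr_realpow)
    also have "\<dots> \<le> n powr \<beta>" using n2' \<beta>3 by (intro powr_mono) auto
    finally show ?thesis .
  qed
  have n3ge: "n ^ 3 \<ge> 8" using power_mono[OF n2', of 3] by simp
  have \<theta>2: "\<theta> \<ge> 8" using \<theta>lo nb n3ge by (simp add: n_def)
  define Q where "Q = n3 powr 1.5"
  have Q0: "Q > 0" using n3 by (simp add: Q_def)
  have Q2: "Q^2 = n3^3"
  proof -
    have "Q^2 = Q powr (real 2)" using Q0 by (subst powr_realpow) auto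
    also have "\<dots> = n3 powr (1.5 * real 2)" unfolding Q_def by (simp only: powr_powr)
    also have "\<dots> = n3 powr (real 3)" by simp
    also have "\<dots> = n3^3" using n3 by (subst powr_realpow) auto
    finally show ?thesis .
  qed
  define q where "q = 3 * r * Q * b / c"
  have q0: "q > 0" using r b c Q0 by (simp add: q_def)
  have npq: "n powr \<beta> \<ge> n * q"
  proof -
    have "\<beta> * ln n \<ge> ln n + ln q"
    proof -
      have lnpos: "ln n > 0" using n2' by simp
      have "\<beta> \<ge> 1 + ln q / ln n" using \<beta>q by (simp add: q_def Q_def n_def)
      then have "\<beta> * ln n \<ge> (1 + ln q / ln n) * ln n" using lnpos by (intro mult_right_mono) auto
      moreover have "(1 + ln q / ln n) * ln n = ln n + ln q" using lnpos by (simp add: field_simps)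
      ultimately show ?thesis by linarith
    qed
    then have "exp (ln n + ln q) \<le> exp (\<beta> * ln n)" by simp
    then show ?thesis using n2' q0 by (simp add: exp_add powr_def mult.commute)
  qed
  have d0: "\<delta>0 \<ge> 0" using r n3 b \<theta>2 by (simp add: \<delta>0_def)
  have d1: "\<delta>0 \<le> 4 * r * n3 * b / (n * q)"
  proof -
    have "\<delta>0 \<le> 2 * r * n3 * b / (\<theta> / 2)"
      unfolding \<delta>0_def using r n3 b \<theta>2 by (intro divide_left_mono) auto
    also have "\<dots> = 4 * r * n3 * b / \<theta>" by simp
    also have "\<dots> \<le> 4 * r * n3 * b / (n * q)"
      using r n3 b q0 n2' npq \<theta>lo \<theta>2 by (intro divide_left_mono) (auto simp: n_def)
    finally show ?thesis .
  qed
  have d2: "4 * r * n3 * b / (n * q) = 4 * c * n3 / (3 * n * Q)"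
    using r b c Q0 n2' by (simp add: q_def field_simps)
  have d3: "\<delta>0^2 \<le> 16 * c^2 / (9 * n^2 * n3)"
  proof -
    have "\<delta>0^2 \<le> (4 * c * n3 / (3 * n * Q))^2" using d0 d1 d2 by (intro power_mono) auto
    also have "\<dots> = 16 * c^2 * n3^2 / (9 * n^2 * Q^2)" by (simp add: power_mult_distrib power_divide)
    also have "\<dots> = 16 * c^2 / (9 * n^2 * n3)" using n3 n2' by (simp only: Q2) (simp add: field_simps power2_eq_square power3_eq_cube)
    finally show ?thesis .
  qed
  have mle: "m \<le> n^2 * n3"
  proof -
    have "n1 * n2 \<le> n * n" using n1 n2 by (intro mult_mono) (auto simp: n_def)
    then have "n1 * n2 * n3 \<le> n * n * n3" using n3 by (intro mult_right_mono) auto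
    then show ?thesis using mN by (simp add: power2_eq_square)
  qed
  have part1: "m * \<delta>0^2 / (2 * \<tau>^2) \<le> 8 / 9 * t"
  proof -
    have "m * \<delta>0^2 \<le> (n^2 * n3) * (16 * c^2 / (9 * n^2 * n3))"
      using mle d3 m4 d0 by (intro mult_mono) auto
    also have "\<dots> = 16 * c^2 / 9" using n2' n3 by (simp add: field_simps)
    finally have "m * \<delta>0^2 \<le> 16 * c^2 / 9" .
    then show ?thesis using \<tau> by (simp add: t_def field_simps)
  qed
  have lnm: "ln m \<ge> 34/36"
  proof -
    have "ln m \<ge> ln 4" using m4 by simp
    moreover have "ln (4::real) = 2 * ln 2" using ln_realpow[of 2 2] by simp
    ultimately show ?thesis using ln2_ge by linarith
  qed
  have part1': "m * \<delta>0^2 / (2 * \<tau>^2) \<le> 3 * c^2 / (2 * \<tau>^2) * ln m"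
  proof -
    have "t * (8 / 9) \<le> t * (3 / 2 * ln m)" using t0 lnm by (intro mult_left_mono) auto
    then have "8 / 9 * t \<le> 3 / 2 * t * ln m" by (simp add: algebra_simps)
    then show ?thesis using part1 by (simp add: t_def field_simps)
  qed
  have lam2: "lam / 2 = 2 * (\<beta> + 2) * (1 + t / 3) * L"
    by (simp add: lam_def L_def t_def field_simps)
  have lamge: "lam / 2 \<ge> 2 * (\<beta> + 2) * L"
  proof -
    have "2 * (\<beta> + 2) * L * 1 \<le> 2 * (\<beta> + 2) * L * (1 + t / 3)"
      using \<beta>3 L0 t0 by (intro mult_left_mono) auto
    then show ?thesis by (simp add: lam2 algebra_simps)
  qed
  have part2: "lam * s1 / 2 \<le> (3 + t) * (\<beta> + 2) * s2 * L"
  proof -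
    have "lam / 2 \<le> (3 + t) * (\<beta> + 2) * L"
    proof -
      have "(3 + t) * (\<beta> + 2) - 2 * (\<beta> + 2) * (1 + t / 3) = (\<beta> + 2) * (1 + t / 3)" by (simp add: algebra_simps)
      moreover have "(\<beta> + 2) * (1 + t / 3) \<ge> 0" using \<beta>3 t0 by simp
      ultimately have "2 * (\<beta> + 2) * (1 + t / 3) \<le> (3 + t) * (\<beta> + 2)" by linarith
      then show ?thesis unfolding lam2 using L0 by (intro mult_right_mono) auto
    qed
    moreover have "lam / 2 \<ge> 0"
    proof -
      have "0 \<le> 2 * (\<beta> + 2) * L" using \<beta>3 L0 by simp
      then show ?thesis using lamge by linarith
    qed
    ultimately have "lam / 2 * s1 \<le> (3 + t) * (\<beta> + 2) * L * s2"
      using s by (intro mult_mono) (auto intro!: mult_nonneg_nonneg simp: t0)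
    then show ?thesis by (simp add: algebra_simps)
  qed
  have lnth: "ln \<theta> \<le> (\<beta> + 1) * L"
  proof -
    have "ln \<theta> \<le> ln (2 * n powr \<beta>)" using \<theta>hi \<theta>2 by (intro ln_mono) (auto simp: n_def)
    also have "\<dots> = ln 2 + \<beta> * ln n" using n2' by (simp add: ln_mult ln_powr)
    also have "ln (2::real) \<le> ln n" using n2' by simp
    finally show ?thesis by (simp add: Ln algebra_simps)
  qed
  have part3: "r * n1 * n3 * ln \<theta> \<le> r * n1 * n3 * ((\<beta> + 1) * L)"
    using lnth r n1 n3 by (intro mult_left_mono) auto
  have part4: "r * n2 * n3 * \<theta> * exp (- lam / 2) \<le> 2 * r * n1 * n3 * L"
  proof -
    have e1: "exp (- lam / 2) \<le> exp (- (2 * (\<beta> + 2) * L))" using lamge by simp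
    have e2: "exp (- (2 * (\<beta> + 2) * L)) = 1 / n powr (2 * (\<beta> + 2))"
      using n2' by (simp add: Ln powr_def exp_minus mult.commute divide_inverse)
    have "\<theta> * exp (- lam / 2) \<le> (2 * n powr \<beta>) * (1 / n powr (2 * (\<beta> + 2)))"
    proof -
      have e3: "exp (- lam / 2) \<le> 1 / n powr (2 * (\<beta> + 2))" using e1 unfolding e2 .
      show ?thesis using \<theta>hi e3 \<theta>2 by (intro mult_mono) (auto simp: n_def)
    qed
    also have "\<dots> = 2 / n powr (\<beta> + 4)"
    proof -
      have pa: "n powr (2 * (\<beta> + 2)) = n powr \<beta> * n powr (\<beta> + 4)"
        by (subst powr_add[symmetric]) (simp add: algebra_simps)
      have "n powr \<beta> > 0" using n2' by simp
      then show ?thesis unfolding pa by simp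
    qed
    also have "\<dots> \<le> 2 / n powr 4"
      using n2' \<beta>3 by (intro divide_left_mono powr_mono mult_pos_pos) auto
    also have "\<dots> = 2 / n^4"
    proof -
      have "n powr (real 4) = n^4" using n2' by (intro powr_realpow) auto
      then show ?thesis by simp
    qed
    finally have th: "\<theta> * exp (- lam / 2) \<le> 2 / n^4" .
    have "n2 * (2 / n^4) \<le> 1"
    proof -
      have "n^4 \<ge> 2 * n"
      proof -
        have "n^4 = n * n^3" by (simp add: power4_eq_xxxx power3_eq_cube)
        moreover have "n * 8 \<le> n * n^3" using n3ge n2' by (intro mult_left_mono) auto
        ultimately show ?thesis using n2' by linarith
      qed
      moreover have "n2 \<le> n" by (simp add: n_def)
      ultimately have "n2 * 2 \<le> n^4" by linarith
      then show ?thesis using n2' by (simp add: field_simps)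
    qed
    moreover have "n2 * (\<theta> * exp (- lam / 2)) \<le> n2 * (2 / n^4)"
      using th n2 by (intro mult_left_mono) auto
    ultimately have "n2 * (\<theta> * exp (- lam / 2)) \<le> 1" by linarith
    then have "r * n3 * (n2 * (\<theta> * exp (- lam / 2))) \<le> r * n3 * 1"
      using r n3 by (intro mult_left_mono) auto
    also have "r * n3 * 1 \<le> r * n3 * (2 * n1 * L)"
    proof -
      have "2 * (17/36) \<le> n1 * L" using n1 L0 by (intro mult_mono) auto
      then have "2 * n1 * L \<ge> 1" by linarith
      then show ?thesis using r n3 by (intro mult_left_mono) auto
    qed
    finally show ?thesis by (simp add: algebra_simps)
  qed
  have "r * n1 * n3 * ((\<beta> + 1) * L) + 2 * r * n1 * n3 * L \<le> (3 + t) * (\<beta> + 2) * (r * n1 * n3) * L"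
  proof -
    have "r * n1 * n3 * ((\<beta> + 1) * L) + 2 * r * n1 * n3 * L = (r * n1 * n3 * L) * (\<beta> + 3)" by (simp add: algebra_simps)
    also have "\<dots> \<le> (r * n1 * n3 * L) * ((3 + t) * (\<beta> + 2))"
      using r n1 n3 L0 \<beta>3 t0 by (intro mult_left_mono) (auto simp: algebra_simps intro!: mult_nonneg_nonneg)
    finally show ?thesis by (simp add: algebra_simps)
  qed
  moreover have "(3 + c^2 / \<tau>^2) * (\<beta> + 2) * (r * n1 * n3 + s2) * L
      = (3 + t) * (\<beta> + 2) * (r * n1 * n3) * L + (3 + t) * (\<beta> + 2) * s2 * L"
    using \<tau> by (simp add: t_def field_simps)
  ultimately show ?thesis using part1' part2 part3 part4 by linarith
qed



lemma theta_bounds: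
  assumes "\<beta> \<ge> 0" "max n1 n2 \<ge> (2::nat)"
  shows "real (max n1 n2) powr \<beta> \<le> real (theta \<beta> n1 n2)"
    "real (theta \<beta> n1 n2) \<le> 2 * real (max n1 n2) powr \<beta>"
proof -
  define n where "n = real (max n1 n2)"
  have n2: "n \<ge> 2" using assms by (simp add: n_def)
  define x where "x = \<beta> * log 2 n"
  have x0: "x \<ge> 0" using assms n2 by (simp add: x_def)
  have t: "real (theta \<beta> n1 n2) = 2 powr real (nat \<lceil>x\<rceil>)"
    by (simp add: theta_def x_def n_def powr_realpow)
  have k1: "x \<le> real (nat \<lceil>x\<rceil>)" using x0 by linarith
  have k2: "real (nat \<lceil>x\<rceil>) \<le> x + 1" using x0 by linarith
  have px: "2 powr x = n powr \<beta>"
  proof -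
    have "2 powr x = (2 powr log 2 n) powr \<beta>" by (simp add: x_def powr_powr mult.commute)
    also have "\<dots> = n powr \<beta>" using n2 by simp
    finally show ?thesis .
  qed
  have "n powr \<beta> \<le> 2 powr real (nat \<lceil>x\<rceil>)" unfolding px[symmetric] using k1 by (intro powr_mono) auto
  then show "real (max n1 n2) powr \<beta> \<le> real (theta \<beta> n1 n2)"
    unfolding t by (simp add: n_def)
  have "2 powr real (nat \<lceil>x\<rceil>) \<le> 2 powr (x + 1)" using k2 by (intro powr_mono) auto
  also have "\<dots> = 2 * 2 powr x" by (simp add: powr_add)
  finally show "real (theta \<beta> n1 n2) \<le> 2 * real (max n1 n2) powr \<beta>"
    unfolding t by (simp add: px n_def)
qed

lemma obj_eq:
  assumes "finite Om" "\<tau> > 0"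
  shows "objective n1 n2 n3 r \<tau> lam Om Y AB
    = (\<Sum>e\<in>Om. \<bar>Y e - tprod r n3 (fst AB) (snd AB) (fst e) (fst (snd e)) (snd (snd e))\<bar> / \<tau> + ln (2 * \<tau>))
      + lam * real (l0norm r n2 n3 (snd AB))"
proof -
  let ?X = "tprod r n3 (fst AB) (snd AB)"
  have "(\<Prod>(i,j,k)\<in>Om. laplace_dens \<tau> (?X i j k) (Y (i,j,k)))
      = (\<Prod>e\<in>Om. laplace_dens \<tau> (?X (fst e) (fst (snd e)) (snd (snd e))) (Y e))"
    by (intro prod.cong refl) (auto split: prod.splits)
  moreover have "ln (\<Prod>e\<in>Om. laplace_dens \<tau> (?X (fst e) (fst (snd e)) (snd (snd e))) (Y e))
      = (\<Sum>e\<in>Om. ln (laplace_dens \<tau> (?X (fst e) (fst (snd e)) (snd (snd e))) (Y e)))"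
    using assms by (intro ln_prod) (auto simp: laplace_dens_def)
  moreover have "ln (laplace_dens \<tau> x y) = - (\<bar>y - x\<bar> / \<tau> + ln (2 * \<tau>))" for x y
    using assms by (simp add: laplace_dens_def ln_div)
  moreover have "(\<Sum>e\<in>Om. - (\<bar>Y e - ?X (fst e) (fst (snd e)) (snd (snd e))\<bar> / \<tau> + ln (2 * \<tau>)))
     = - (\<Sum>e\<in>Om. \<bar>Y e - ?X (fst e) (fst (snd e)) (snd (snd e))\<bar> / \<tau> + ln (2 * \<tau>))"
    by (rule sum_negf)
  ultimately show ?thesis
    by (simp add: objective_def Let_def del: minus_add_distrib)
qed

lemma card_box: "card (box a b c) = a * b * c"
  by (simp add: box_def card_cartesian_product)

lemma finite_box[simp]: "finite (box a b c)"
  by (simp add: box_def)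

lemma tprod_cong_box:
  assumes "n3 > 0" "j < n2"
    and "\<And>i' l k'. i' = i \<Longrightarrow> l < r \<Longrightarrow> k' < n3 \<Longrightarrow> A i' l k' = A' i' l k'"
    and "\<And>l k'. l < r \<Longrightarrow> k' < n3 \<Longrightarrow> B l j k' = B' l j k'"
  shows "tprod r n3 A B i j k = tprod r n3 A' B' i j k"
  unfolding tprod_def using assms by (intro sum.cong refl) (auto intro!: sum.cong)

lemma card_levels: "card (levels th u) \<le> th"
proof -
  have "levels th u = (\<lambda>t. u * real t / real (th - 1)) ` {..<th}" by (auto simp: levels_def)
  then show ?thesis by (metis card_image_le card_lessThan finite_lessThan)
qed

lemma finite_levels[simp]: "finite (levels th u)"
proof -
  have "levels th u = (\<lambda>t. u * real t / real (th - 1)) ` {..<th}" by (auto simp: levels_def)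
  then show ?thesis by simp
qed

lemma zero_levels: "th \<ge> 1 \<Longrightarrow> 0 \<in> levels th u"
  unfolding levels_def by force



lemma ls_split:
  assumes "finite Bx" "Om = {x\<in>Bx. fst (\<omega> x)}"
  shows "(\<Sum>e\<in>Om. \<bar>snd (\<omega> e) - d e\<bar> / \<tau> + l) = (\<Sum>e\<in>Bx. ell \<tau> (d e) (\<omega> e)) + (\<Sum>e\<in>Om. \<bar>snd (\<omega> e)\<bar> / \<tau> + l)"
proof -
  have "(\<Sum>e\<in>Bx. ell \<tau> (d e) (\<omega> e)) = (\<Sum>e\<in>Om. (\<bar>snd (\<omega> e) - d e\<bar> - \<bar>snd (\<omega> e)\<bar>) / \<tau>)"
    unfolding assms(2) ell_def using assms(1) by (simp add: sum.inter_filter[symmetric])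
  then show ?thesis by (simp add: sum.distrib[symmetric] diff_divide_distrib)
qed

lemma ell_comp_meas:
  fixes I :: "'i set"
  assumes "e \<in> I"
  shows "(\<lambda>\<omega>. ell \<tau> d (\<omega> e)) \<in> borel_measurable (PiM I (\<lambda>_. measure_pmf (bernoulli_pmf p) \<Otimes>\<^sub>M laplace_measure \<tau>'))"
  by (rule measurable_compose[OF measurable_component_singleton[OF assms] ell_meas])

theorem proposition2:
  fixes n1 n2 n3 r m :: nat and b c \<tau> :: real
    and Astar Bstar :: tensor
    and est :: "(nat \<times> nat \<times> nat) set \<Rightarrow> (nat \<times> nat \<times> nat \<Rightarrow> real) \<Rightarrow> tensor \<times> tensor"
  defines "Xstar \<equiv> tprod r n3 Astar Bstar"
    and "\<beta> \<equiv> beta_of n1 n2 n3 r b c"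
    and "M \<equiv> PiM (box n1 n2 n3)
               (\<lambda>_. measure_pmf (bernoulli_pmf (real m / real (n1 * n2 * n3))) \<Otimes>\<^sub>M laplace_measure \<tau>)"
    and "err \<equiv> (\<lambda>\<omega>. let Om = {x \<in> box n1 n2 n3. fst (\<omega> x)};
                        Y = (\<lambda>x. (case x of (i,j,k) \<Rightarrow> tprod r n3 Astar Bstar i j k) + snd (\<omega> x));
                        AB = est Om (restrict Y Om)
                    in frob2 n1 n2 n3 (\<lambda>i j k. tprod r n3 (fst AB) (snd AB) i j k - tprod r n3 Astar Bstar i j k))"
  assumes "n1 \<ge> 2" "n2 \<ge> 2" "n3 \<ge> 2"
    and "0 < r" "r \<le> min n1 n2"
    and "b > 0" "c > 0" "\<tau> > 0"
    and "\<forall>(i,l,k) \<in> box n1 r n3. 0 \<le> Astar i l k \<and> Astar i l k \<le> 1"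
    and "\<forall>(l,j,k) \<in> box r n2 n3. 0 \<le> Bstar l j k \<and> Bstar l j k \<le> b"
    and "\<forall>(i,j,k) \<in> box n1 n2 n3. 0 \<le> Xstar i j k \<and> Xstar i j k \<le> c / 2"
    and "4 \<le> m" "m \<le> n1 * n2 * n3"
    and "\<forall>Om Y. Om \<subseteq> box n1 n2 n3 \<longrightarrow>
           est Om Y \<in> Gam (theta \<beta> n1 n2) b c n1 n2 n3 r \<and>
           (\<forall>AB \<in> Gam (theta \<beta> n1 n2) b c n1 n2 n3 r.
              objective n1 n2 n3 r \<tau> (lam_of n1 n2 \<beta> c \<tau>) Om Y (est Om Y) \<le> objective n1 n2 n3 r \<tau> (lam_of n1 n2 \<beta> c \<tau>) Om Y AB)"
    and "err \<in> borel_measurable M"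
  shows "(\<integral>\<omega>. err \<omega> \<partial>M) / real (n1 * n2 * n3)
     \<le> 3 * c^2 * (2 * \<tau> + c)^2 * ln (real m) / (real m * \<tau>^2)
       + 2 * (3 + c^2 / \<tau>^2) * (2 * \<tau> + c)^2 * (\<beta> + 2)
         * ((real (r * n1 * n3) + real (l0norm r n2 n3 Bstar)) / real m)
         * ln (real (max n1 n2))"
proof -
  note Xs_def = Xstar_def
  have n1: "n1 \<ge> 2" and n2: "n2 \<ge> 2" and n3: "n3 \<ge> 2" and r0: "0 < r" and rle: "r \<le> min n1 n2"
    and b0: "b > 0" and c0: "c > 0" and \<tau>0: "\<tau> > 0" and m4: "4 \<le> m" and mN: "m \<le> n1 * n2 * n3"
    using assms by auto
  note hA = assms(13) and hB = assms(14) and hX = assms(15) and hest = assms(18) and errm = assms(19)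
  define N where "N = n1 * n2 * n3"
  define \<gamma> where "\<gamma> = real m / real N"
  have Npos: "N > 0" using n1 n2 n3 by (simp add: N_def)
  have \<gamma>0: "0 < \<gamma>" using m4 Npos by (simp add: \<gamma>_def)
  have mNr: "real m \<le> real N" using mN N_def of_nat_le_iff by blast
  have \<gamma>1: "\<gamma> \<le> 1" using mNr Npos by (simp add: \<gamma>_def)
  have \<gamma>N: "\<gamma> * real N = real m" using Npos by (simp add: \<gamma>_def)
  define Bx where "Bx = box n1 n2 n3"
  define B1 where "B1 = box n1 r n3"
  define B2 where "B2 = box r n2 n3"
  define \<theta> where "\<theta> = theta \<beta> n1 n2"
  define lam where "lam = lam_of n1 n2 \<beta> c \<tau>"
  have \<beta>3: "\<beta> \<ge> 3" by (simp add: \<beta>_def beta_of_def)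
  have nmax: "max n1 n2 \<ge> 2" using n1 by simp
  have th_lo: "real (max n1 n2) powr \<beta> \<le> real \<theta>" and th_hi: "real \<theta> \<le> 2 * real (max n1 n2) powr \<beta>"
    using theta_bounds[of \<beta> n1 n2] \<beta>3 nmax by (auto simp: \<theta>_def)
  have th8: "real \<theta> \<ge> 8"
  proof -
    have "(8::real) \<le> real (max n1 n2) ^ 3" using power_mono[of 2 "real (max n1 n2)" 3] nmax by simp
    also have "\<dots> = real (max n1 n2) powr 3" using nmax by (simp add: powr_realpow)
    also have "\<dots> \<le> real (max n1 n2) powr \<beta>" using nmax \<beta>3 by (intro powr_mono) auto
    finally show ?thesis using th_lo by linarith
  qed
  have th2: "\<theta> \<ge> 2" using th8 by simp
  let ?P = "measure_pmf (bernoulli_pmf \<gamma>) \<Otimes>\<^sub>M laplace_measure \<tau>"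
  have M_eq: "M = PiM Bx (\<lambda>_. ?P)" by (simp add: M_def Bx_def \<gamma>_def N_def)
  interpret MP: prob_space M unfolding M_eq by (intro prob_space_PiM prob_Pe \<tau>0)
  define cur :: "(nat \<times> nat \<times> nat \<Rightarrow> real) \<Rightarrow> tensor" where "cur f = (\<lambda>i j k. f (i, j, k))" for f
  define Xs where "Xs e = tprod r n3 Astar Bstar (fst e) (fst (snd e)) (snd (snd e))" for e
  define Xg where "Xg g e = tprod r n3 (cur (fst g)) (cur (snd g)) (fst e) (fst (snd e)) (snd (snd e))" for g e
  define dg where "dg g e = Xg g e - Xs e" for g e
  define LA where "LA = levels \<theta> 1"
  define VB where "VB = insert 0 (levels \<theta> b)"
  define GA where "GA = PiE B1 (\<lambda>_. LA)"
  define GB where "GB = PiE B2 (\<lambda>_. VB)"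
  define G where "G = GA \<times> GB"
  define hh where "hh = lam / 2"
  define C0 where "C0 = ln (real (card GA)) + real (card B2) * ln (1 + real \<theta> * exp (- hh))"
  define pen where "pen g = C0 + hh * real (card {e\<in>B2. snd g e \<noteq> 0})" for g :: "(nat \<times> nat \<times> nat \<Rightarrow> real) \<times> (nat \<times> nat \<times> nat \<Rightarrow> real)"
  define Hf where "Hf g = \<gamma> * (\<Sum>e\<in>Bx. 1 - aff \<tau> (dg g e))" for g
  define Ls where "Ls d \<omega> = (\<Sum>e\<in>Bx. ell \<tau> (d e) (\<omega> e))" for d and \<omega> :: "nat \<times> nat \<times> nat \<Rightarrow> bool \<times> real"
  define S where "S \<omega> = (\<Sum>g\<in>G. exp (Hf g - pen g - Ls (dg g) \<omega> / 2))" for \<omega>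
  define A' where "A' = (\<lambda>i l k. quant 1 \<theta> (Astar i l k))"
  define B' where "B' = (\<lambda>l j k. quant b \<theta> (Bstar l j k))"
  define d' where "d' e = tprod r n3 A' B' (fst e) (fst (snd e)) (snd (snd e)) - Xs e" for e
  define Lb where "Lb \<omega> = (\<Sum>e\<in>Bx. \<bar>d' e\<bar> / \<tau> * (indicator ({True} \<times> UNIV) (\<omega> e) - 2 * indicator ({True} \<times> far (d' e)) (\<omega> e)))" for \<omega>
  define s' where "s' = l0norm r n2 n3 B'"
  define k where "k = \<gamma> / (2 * (2 * \<tau> + c)^2)"
  define \<delta>0 where "\<delta>0 = 2 * real r * real n3 * b / (real \<theta> - 1)"
  have finLA: "finite LA" by (simp add: LA_def)
  have finVB: "finite VB" by (simp add: VB_def)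
  have finGA: "finite GA" unfolding GA_def using finLA by (intro finite_PiE) (auto simp: B1_def)
  have finG: "finite G" unfolding G_def GB_def using finGA finVB by (intro finite_cartesian_product finite_PiE) (auto simp: B2_def)
  have lam0: "lam \<ge> 0"
  proof -
    have "ln (real (max n1 n2)) \<ge> 0" using nmax by simp
    then show ?thesis using \<beta>3 by (simp add: lam_def lam_of_def Let_def)
  qed
  have hh0: "hh \<ge> 0" using lam0 by (simp add: hh_def)
  have kraft: "(\<Sum>g\<in>G. exp (- pen g)) \<le> 1"
  proof -
    have LA0: "0 \<in> LA" using th2 by (simp add: LA_def zero_levels)
    have GAne: "GA \<noteq> {}" unfolding GA_def using LA0 by (auto simp: PiE_eq_empty_iff)
    have cV: "real (card (VB - {0})) \<le> real \<theta>"
    proof -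
      have "card (VB - {0}) \<le> card (levels \<theta> b)" unfolding VB_def by (intro card_mono) auto
      also have "\<dots> \<le> \<theta>" by (rule card_levels)
      finally show ?thesis by simp
    qed
    have "(\<Sum>g\<in>GA \<times> PiE B2 (\<lambda>_. VB). exp (- (ln (real (card GA)) + real (card B2) * ln (1 + real \<theta> * exp (- hh))
            + hh * real (card {e\<in>B2. snd g e \<noteq> 0})))) \<le> 1"
      by (rule kraft[OF finGA GAne _ finVB _ cV hh0]) (auto simp: B2_def VB_def)
    then show ?thesis by (simp add: G_def GB_def pen_def C0_def)
  qed
  have S_nn: "(\<integral>\<^sup>+\<omega>. ennreal (S \<omega>) \<partial>M) \<le> 1"
    unfolding M_eq S_def Hf_def Ls_def
    by (rule KEY_S[OF _ finG _ _ \<tau>0 kraft]) (use \<gamma>0 \<gamma>1 in \<open>auto simp: Bx_def\<close>)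
  have Lsm[measurable]: "(\<lambda>\<omega>. Ls (dg g) \<omega>) \<in> borel_measurable M" for g
    unfolding Ls_def M_eq by (intro borel_measurable_sum ell_comp_meas)
  have S_meas: "S \<in> borel_measurable M" unfolding S_def[abs_def] by measurable
  have S_pos: "\<And>\<omega>. S \<omega> \<ge> 0" unfolding S_def by (intro sum_nonneg) auto
  have S_int: "integrable M S"
  proof (rule integrableI_nonneg[OF S_meas])
    show "AE x in M. 0 \<le> S x" using S_pos by simp
    show "(\<integral>\<^sup>+\<omega>. ennreal (S \<omega>) \<partial>M) < \<infinity>" using le_less_trans[OF S_nn, of \<top>] by simp
  qed
  have S_le: "(\<integral>\<omega>. S \<omega> \<partial>M) \<le> 1"
    using S_nn S_pos by (subst integral_eq_nn_integral[OF S_meas]) (auto intro: enn2real_leI)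
  have Lb_int: "integrable M Lb"
    unfolding M_eq Lb_def[abs_def] by (rule KEY_L(2)) (use \<gamma>0 \<gamma>1 \<tau>0 in \<open>auto simp: Bx_def\<close>)
  have Lb_le: "(\<integral>\<omega>. Lb \<omega> \<partial>M) \<le> (\<Sum>e\<in>Bx. \<gamma> * (d' e)^2 / \<tau>^2)"
    unfolding M_eq Lb_def by (rule KEY_L(3)) (use \<gamma>0 \<gamma>1 \<tau>0 in \<open>auto simp: Bx_def\<close>)
  define ea where "ea = 1 / real (\<theta> - 1)"
  define eb where "eb = b / real (\<theta> - 1)"
  have qA: "0 \<le> A' i l k \<and> A' i l k \<le> Astar i l k \<and> Astar i l k \<le> 1 \<and> Astar i l k - A' i l k \<le> ea \<and> A' i l k \<in> levels \<theta> 1"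
    if "(i, l, k) \<in> box n1 r n3" for i l k
  proof -
    have "0 \<le> Astar i l k" "Astar i l k \<le> 1" using hA that by auto
    then show ?thesis using quant_props[of 1 \<theta> "Astar i l k"] th2 by (auto simp: A'_def ea_def)
  qed
  have qB: "0 \<le> B' l j k \<and> B' l j k \<le> Bstar l j k \<and> Bstar l j k \<le> b \<and> Bstar l j k - B' l j k \<le> eb \<and> B' l j k \<in> levels \<theta> b
      \<and> (Bstar l j k = 0 \<longrightarrow> B' l j k = 0)"
    if "(l, j, k) \<in> box r n2 n3" for l j k
  proof -
    have "0 \<le> Bstar l j k" "Bstar l j k \<le> b" using hB that by auto
    then show ?thesis using quant_props[of b \<theta> "Bstar l j k"] th2 b0 by (auto simp: B'_def eb_def)
  qed
  have appr: "0 \<le> tprod r n3 A' B' i j k \<and> tprod r n3 A' B' i j k \<le> tprod r n3 Astar Bstar i j k \<and>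
      tprod r n3 Astar Bstar i j k - tprod r n3 A' B' i j k \<le> real n3 * real r * (ea * b + eb)"
    if "(i, j, k) \<in> Bx" for i j k
  proof -
    have n30: "n3 > 0" using n3 by simp
    have i: "i < n1" and j: "j < n2" using that by (auto simp: Bx_def box_def)
    have hA': "0 \<le> A' i l k' \<and> A' i l k' \<le> Astar i l k' \<and> Astar i l k' \<le> 1 \<and> Astar i l k' - A' i l k' \<le> ea"
      if "l < r" "k' < n3" for l k' using qA[of i l k'] that i by (auto simp: box_def)
    have hB': "0 \<le> B' l j k' \<and> B' l j k' \<le> Bstar l j k' \<and> Bstar l j k' \<le> b \<and> Bstar l j k' - B' l j k' \<le> eb"
      if "l < r" "k' < n3" for l k' using qB[of l j k'] that j by (auto simp: box_def)
    show ?thesis using tprod_approx[where A'=A' and A=Astar and B'=B' and B=Bstar and i=i and j=j and k=k and ea=ea and eb=eb and b=b, OF n30 hA' hB'] by auto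
  qed
  have ABG: "(A', B') \<in> Gam \<theta> b c n1 n2 n3 r"
  proof -
    have "A' \<in> LL \<theta> n1 r n3" unfolding LL_def using qA by auto
    moreover have "B' \<in> DD \<theta> b r n2 n3" unfolding DD_def using qB by auto
    moreover have "0 \<le> tprod r n3 A' B' i j k \<and> tprod r n3 A' B' i j k \<le> c" if "(i, j, k) \<in> box n1 n2 n3" for i j k
    proof -
      have "Xstar i j k \<le> c / 2" using hX that by auto
      then show ?thesis using appr[of i j k] that c0 by (auto simp: Bx_def Xstar_def)
    qed
    ultimately show ?thesis unfolding Gam_def by auto
  qed
  have d'b: "\<bar>d' e\<bar> \<le> \<delta>0" if "e \<in> Bx" for e
  proof -
    obtain i j k where e: "e = (i, j, k)" by (cases e) auto
    have eq: "real n3 * real r * (ea * b + eb) = \<delta>0"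
    proof -
      have t1: "real (\<theta> - 1) = real \<theta> - 1" using th2 by (simp add: of_nat_diff)
      have t2: "real \<theta> - 1 \<noteq> 0" using th8 by simp
      have "1 / (real \<theta> - 1) * b + b / (real \<theta> - 1) = 2 * b / (real \<theta> - 1)" by (simp add: add_divide_distrib[symmetric])
      then show ?thesis unfolding ea_def eb_def \<delta>0_def t1 by simp
    qed
    show ?thesis using appr[of i j k] that eq by (auto simp: d'_def Xs_def e)
  qed
  have s'le: "s' \<le> l0norm r n2 n3 Bstar"
    unfolding s'_def l0norm_def
  proof (rule card_mono)
    show "finite {(i, j, k) \<in> box r n2 n3. Bstar i j k \<noteq> 0}" by (rule finite_subset[of _ "box r n2 n3"]) auto
    show "{(i, j, k) \<in> box r n2 n3. B' i j k \<noteq> 0} \<subseteq> {(i, j, k) \<in> box r n2 n3. Bstar i j k \<noteq> 0}"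
      using qB by auto
  qed
  have pwb: "k * err \<omega> \<le> Lb \<omega> / 2 + (hh * real s' + C0 - 1) + S \<omega> \<and> \<bar>err \<omega>\<bar> \<le> real (card Bx) * c^2"
    if "\<omega> \<in> space M" for \<omega>
  proof -
    define Om where "Om = {x\<in>Bx. fst (\<omega> x)}"
    define Y where "Y = (\<lambda>x. (case x of (i, j, k) \<Rightarrow> tprod r n3 Astar Bstar i j k) + snd (\<omega> x))"
    define AB where "AB = est Om (restrict Y Om)"
    have errw: "err \<omega> = frob2 n1 n2 n3 (\<lambda>i j k. tprod r n3 (fst AB) (snd AB) i j k - tprod r n3 Astar Bstar i j k)"
      by (simp add: err_def Om_def Y_def AB_def Bx_def Let_def)
    have OmB: "Om \<subseteq> box n1 n2 n3" by (auto simp: Om_def Bx_def)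
    have finOm: "finite Om" by (rule finite_subset[OF OmB]) simp
    have ABG': "AB \<in> Gam \<theta> b c n1 n2 n3 r"
      and minAB: "objective n1 n2 n3 r \<tau> lam Om (restrict Y Om) AB \<le> objective n1 n2 n3 r \<tau> lam Om (restrict Y Om) (A', B')"
    proof -
      have h1: "est Om (restrict Y Om) \<in> Gam (theta \<beta> n1 n2) b c n1 n2 n3 r \<and>
           (\<forall>AB\<in>Gam (theta \<beta> n1 n2) b c n1 n2 n3 r.
              objective n1 n2 n3 r \<tau> (lam_of n1 n2 \<beta> c \<tau>) Om (restrict Y Om) (est Om (restrict Y Om))
              \<le> objective n1 n2 n3 r \<tau> (lam_of n1 n2 \<beta> c \<tau>) Om (restrict Y Om) AB)"
        using hest[rule_format, of Om "restrict Y Om", OF OmB] .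
      then show "AB \<in> Gam \<theta> b c n1 n2 n3 r" unfolding AB_def \<theta>_def by (rule conjunct1)
      have "(A', B') \<in> Gam (theta \<beta> n1 n2) b c n1 n2 n3 r" using ABG unfolding \<theta>_def .
      with h1[THEN conjunct2] show "objective n1 n2 n3 r \<tau> lam Om (restrict Y Om) AB \<le> objective n1 n2 n3 r \<tau> lam Om (restrict Y Om) (A', B')"
        unfolding AB_def lam_def by (rule bspec)
    qed
    obtain A B where AB: "AB = (A, B)" by (cases AB)
    have AL: "A \<in> LL \<theta> n1 r n3" and BD: "B \<in> DD \<theta> b r n2 n3"
      and Xr: "\<forall>(i, j, k)\<in>box n1 n2 n3. 0 \<le> tprod r n3 A B i j k \<and> tprod r n3 A B i j k \<le> c"
    proof -
      have G3: "A \<in> LL \<theta> n1 r n3 \<and> B \<in> DD \<theta> b r n2 n3 \<and> (\<forall>(i, j, k)\<in>box n1 n2 n3. 0 \<le> tprod r n3 A B i j k \<and> tprod r n3 A B i j k \<le> c)"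
        using ABG' unfolding AB Gam_def mem_Collect_eq prod.case .
      then show "A \<in> LL \<theta> n1 r n3" "B \<in> DD \<theta> b r n2 n3"
        "\<forall>(i, j, k)\<in>box n1 n2 n3. 0 \<le> tprod r n3 A B i j k \<and> tprod r n3 A B i j k \<le> c" by blast+
    qed
    define gh where "gh = (restrict (\<lambda>(i, l, k). A i l k) B1, restrict (\<lambda>(l, j, k). B l j k) B2)"
    have ghG: "gh \<in> G"
    proof -
      have "restrict (\<lambda>(i, l, k). A i l k) B1 \<in> GA"
        unfolding GA_def using AL by (auto simp: LL_def LA_def B1_def)
      moreover have "restrict (\<lambda>(l, j, k). B l j k) B2 \<in> GB"
        unfolding GB_def using BD by (auto simp: DD_def VB_def B2_def)
      ultimately show ?thesis by (simp add: G_def gh_def)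
    qed
    have XgE: "Xg gh e = tprod r n3 A B (fst e) (fst (snd e)) (snd (snd e))" if "e \<in> Bx" for e
    proof -
      obtain i j k where e: "e = (i, j, k)" by (cases e) auto
      have i: "i < n1" and j: "j < n2" using that by (auto simp: e Bx_def box_def)
      show ?thesis unfolding Xg_def e fst_conv snd_conv
        by (rule tprod_cong_box) (use n3 i j in \<open>auto simp: cur_def gh_def B1_def B2_def box_def\<close>)
    qed
    have sgE: "card {e\<in>B2. snd gh e \<noteq> 0} = l0norm r n2 n3 B"
    proof -
      have "{e\<in>B2. snd gh e \<noteq> 0} = {(i, j, k) \<in> box r n2 n3. B i j k \<noteq> 0}"
        by (auto simp: gh_def B2_def)
      then show ?thesis by (simp add: l0norm_def)
    qed
    have dgc: "\<bar>dg gh e\<bar> \<le> c" if "e \<in> Bx" for e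
    proof -
      obtain i j k where e: "e = (i, j, k)" by (cases e) auto
      have "0 \<le> Xs e" "Xs e \<le> c / 2" using hX that by (auto simp: e Xs_def Xstar_def Bx_def)
      moreover have "0 \<le> Xg gh e" "Xg gh e \<le> c" using Xr that XgE[OF that] by (auto simp: e Bx_def)
      ultimately show ?thesis by (simp add: dg_def)
    qed
    have errE: "err \<omega> = (\<Sum>e\<in>Bx. (dg gh e)^2)"
      unfolding errw frob2_def Bx_def[symmetric]
    proof (intro sum.cong refl)
      fix e assume "e \<in> Bx"
      then show "(case e of (i, j, k) \<Rightarrow> (tprod r n3 (fst AB) (snd AB) i j k - tprod r n3 Astar Bstar i j k)^2) = (dg gh e)^2"
        using XgE[of e] by (auto simp: dg_def Xs_def AB split: prod.splits)
    qed
    have errB: "\<bar>err \<omega>\<bar> \<le> real (card Bx) * c^2"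
    proof -
      have "(\<Sum>e\<in>Bx. (dg gh e)^2) \<le> (\<Sum>e\<in>Bx. c^2)"
      proof (intro sum_mono)
        fix e assume "e \<in> Bx"
        then have "\<bar>dg gh e\<bar>^2 \<le> c^2" using dgc by (intro power_mono) auto
        then show "(dg gh e)^2 \<le> c^2" by simp
      qed
      moreover have "0 \<le> (\<Sum>e\<in>Bx. (dg gh e)^2)" by (intro sum_nonneg) auto
      ultimately show ?thesis by (simp add: errE)
    qed
    have F6: "k * err \<omega> \<le> Hf gh"
    proof -
      have "(\<Sum>e\<in>Bx. (dg gh e)^2 / (2 * (2 * \<tau> + c)^2)) \<le> (\<Sum>e\<in>Bx. 1 - aff \<tau> (dg gh e))"
        using aff_bound[OF \<tau>0] dgc by (intro sum_mono) auto
      then have "\<gamma> * (\<Sum>e\<in>Bx. (dg gh e)^2 / (2 * (2 * \<tau> + c)^2)) \<le> Hf gh"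
        unfolding Hf_def using \<gamma>0 by (intro mult_left_mono) auto
      moreover have "k * err \<omega> = \<gamma> * (\<Sum>e\<in>Bx. (dg gh e)^2 / (2 * (2 * \<tau> + c)^2))"
        by (simp add: errE k_def sum_divide_distrib[symmetric])
      ultimately show ?thesis by simp
    qed
    have F5: "Hf gh - pen gh - Ls (dg gh) \<omega> / 2 \<le> S \<omega> - 1"
    proof -
      let ?z = "Hf gh - pen gh - Ls (dg gh) \<omega> / 2"
      have "1 + ?z \<le> exp ?z" by (rule exp_ge_add_one_self)
      also have "exp ?z \<le> S \<omega>" unfolding S_def
        by (rule member_le_sum[OF ghG _ finG, where f="\<lambda>g. exp (Hf g - pen g - Ls (dg g) \<omega> / 2)"]) auto
      finally show ?thesis by simp
    qed
    have objsplit: "objective n1 n2 n3 r \<tau> lam Om (restrict Y Om) (A1, B1') =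
        Ls d \<omega> + (\<Sum>e\<in>Om. \<bar>snd (\<omega> e)\<bar> / \<tau> + ln (2 * \<tau>)) + lam * real (l0norm r n2 n3 B1')"
      if "\<And>e. e \<in> Bx \<Longrightarrow> tprod r n3 A1 B1' (fst e) (fst (snd e)) (snd (snd e)) = Xs e + d e" for A1 B1' d
    proof -
      have "(\<Sum>e\<in>Om. \<bar>restrict Y Om e - tprod r n3 A1 B1' (fst e) (fst (snd e)) (snd (snd e))\<bar> / \<tau> + ln (2 * \<tau>))
          = (\<Sum>e\<in>Om. \<bar>snd (\<omega> e) - d e\<bar> / \<tau> + ln (2 * \<tau>))"
      proof (intro sum.cong refl)
        fix e assume eO: "e \<in> Om"
        then have eB: "e \<in> Bx" by (simp add: Om_def)
        have "restrict Y Om e = Xs e + snd (\<omega> e)" using eO by (auto simp: Y_def Xs_def split: prod.splits)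
        then show "\<bar>restrict Y Om e - tprod r n3 A1 B1' (fst e) (fst (snd e)) (snd (snd e))\<bar> / \<tau> + ln (2 * \<tau>)
            = \<bar>snd (\<omega> e) - d e\<bar> / \<tau> + ln (2 * \<tau>)" using that[OF eB] by simp
      qed
      also have "\<dots> = Ls d \<omega> + (\<Sum>e\<in>Om. \<bar>snd (\<omega> e)\<bar> / \<tau> + ln (2 * \<tau>))"
        unfolding Ls_def by (rule ls_split) (auto simp: Om_def Bx_def)
      finally show ?thesis using obj_eq[OF finOm \<tau>0] by simp
    qed
    have oAB: "objective n1 n2 n3 r \<tau> lam Om (restrict Y Om) (A, B) =
        Ls (dg gh) \<omega> + (\<Sum>e\<in>Om. \<bar>snd (\<omega> e)\<bar> / \<tau> + ln (2 * \<tau>)) + lam * real (l0norm r n2 n3 B)"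
      by (rule objsplit) (simp add: XgE[symmetric] dg_def)
    have oA'B': "objective n1 n2 n3 r \<tau> lam Om (restrict Y Om) (A', B') =
        Ls d' \<omega> + (\<Sum>e\<in>Om. \<bar>snd (\<omega> e)\<bar> / \<tau> + ln (2 * \<tau>)) + lam * real s'"
      unfolding s'_def by (rule objsplit) (simp add: d'_def)
    have F4: "Ls (dg gh) \<omega> + lam * real (l0norm r n2 n3 B) \<le> Ls d' \<omega> + lam * real s'"
      using minAB oAB oA'B' by (simp add: AB)
    have KL: "Ls d' \<omega> \<le> Lb \<omega>"
      unfolding Ls_def Lb_def by (rule KEY_L(1)) (use \<gamma>0 \<gamma>1 \<tau>0 in \<open>auto simp: Bx_def\<close>)
    have pg: "pen gh = C0 + hh * real (l0norm r n2 n3 B)" by (simp add: pen_def sgE)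
    have "k * err \<omega> \<le> Lb \<omega> / 2 + (hh * real s' + C0 - 1) + S \<omega>"
      using F6 F5 F4 KL pg by (simp add: hh_def)
    then show ?thesis using errB by simp
  qed
  have pw: "\<And>\<omega>. \<omega> \<in> space M \<Longrightarrow> k * err \<omega> \<le> Lb \<omega> / 2 + (hh * real s' + C0 - 1) + S \<omega>"
    using pwb by blast
  have err_int: "integrable M err"
    by (rule MP.integrable_const_bound[where B="real (card Bx) * c^2"]) (use pwb errm in auto)
  have "k * (\<integral>\<omega>. err \<omega> \<partial>M) \<le> (\<Sum>e\<in>Bx. \<gamma> * (d' e)^2 / \<tau>^2) / 2 + hh * real s' + C0"
  proof -
    have "k * (\<integral>\<omega>. err \<omega> \<partial>M) = (\<integral>\<omega>. k * err \<omega> \<partial>M)" by simp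
    also have "\<dots> \<le> (\<integral>\<omega>. Lb \<omega> / 2 + (hh * real s' + C0 - 1) + S \<omega> \<partial>M)"
      using pw err_int Lb_int S_int by (intro integral_mono) auto
    also have "\<dots> = (\<integral>\<omega>. Lb \<omega> \<partial>M) / 2 + (hh * real s' + C0 - 1) + (\<integral>\<omega>. S \<omega> \<partial>M)"
      using Lb_int S_int MP.prob_space by (simp add: Bochner_Integration.integral_add)
    finally show ?thesis using Lb_le S_le by linarith
  qed
  note main = this
  have cB: "card Bx = N" by (simp add: Bx_def N_def card_box)
  have sumd: "(\<Sum>e\<in>Bx. \<gamma> * (d' e)^2 / \<tau>^2) \<le> real m * \<delta>0^2 / \<tau>^2"
  proof -
    have "(\<Sum>e\<in>Bx. \<gamma> * (d' e)^2 / \<tau>^2) \<le> (\<Sum>e\<in>Bx. \<gamma> * \<delta>0^2 / \<tau>^2)"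
    proof (intro sum_mono divide_right_mono mult_left_mono)
      fix e assume "e \<in> Bx"
      then have "\<bar>d' e\<bar>^2 \<le> \<delta>0^2" using d'b by (intro power_mono) auto
      then show "(d' e)^2 \<le> \<delta>0^2" by simp
    qed (use \<gamma>0 in auto)
    also have "\<dots> = real N * \<gamma> * \<delta>0^2 / \<tau>^2" by (simp add: cB)
    also have "\<dots> = real m * \<delta>0^2 / \<tau>^2" using \<gamma>N by (simp add: mult.commute)
    finally show ?thesis .
  qed
  have C0le: "C0 \<le> real r * real n1 * real n3 * ln (real \<theta>) + real r * real n2 * real n3 * real \<theta> * exp (- lam / 2)"
  proof -
    have cLA1: "card LA \<ge> 1" using th2 finLA zero_levels[of \<theta> 1] by (simp add: LA_def card_gt_0_iff Suc_le_eq) blast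
    have cLA: "card LA \<le> \<theta>" by (simp add: LA_def card_levels)
    have cGA: "card GA = card LA ^ (n1 * r * n3)"
      by (simp add: GA_def card_PiE B1_def card_box)
    have "ln (real (card GA)) = real (n1 * r * n3) * ln (real (card LA))"
      using cLA1 by (simp add: cGA ln_realpow)
    also have "\<dots> \<le> real (n1 * r * n3) * ln (real \<theta>)"
      using cLA cLA1 by (intro mult_left_mono) auto
    finally have t1: "ln (real (card GA)) \<le> real r * real n1 * real n3 * ln (real \<theta>)" by (simp add: algebra_simps)
    have "ln (1 + real \<theta> * exp (- hh)) \<le> real \<theta> * exp (- hh)" by (rule ln_add_one_self_le_self) simp
    then have "real (card B2) * ln (1 + real \<theta> * exp (- hh)) \<le> real (card B2) * (real \<theta> * exp (- hh))"
      by (intro mult_left_mono) auto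
    also have "\<dots> = real r * real n2 * real n3 * real \<theta> * exp (- lam / 2)"
      by (simp add: B2_def card_box hh_def)
    finally show ?thesis using t1 by (simp add: C0_def)
  qed
  have AF: "real m * \<delta>0^2 / (2 * \<tau>^2) + lam * real s' / 2 + real r * real n1 * real n3 * ln (real \<theta>)
      + real r * real n2 * real n3 * real \<theta> * exp (- lam / 2)
     \<le> 3 * c^2 / (2 * \<tau>^2) * ln (real m) + (3 + c^2 / \<tau>^2) * (\<beta> + 2)
        * (real r * real n1 * real n3 + real (l0norm r n2 n3 Bstar)) * ln (real (max n1 n2))"
  proof -
    have bq: "\<beta> \<ge> 1 + ln (3 * real r * real n3 powr 1.5 * b / c) / ln (max (real n1) (real n2))"
      by (simp add: \<beta>_def beta_of_def of_nat_max)
    have lamE: "lam = 4 * (\<beta> + 2) * (1 + 2 * (c^2 / (2 * \<tau>^2)) / 3) * ln (max (real n1) (real n2))"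
      by (simp add: lam_def lam_of_def Let_def of_nat_max)
    have "real m \<le> real n1 * real n2 * real n3" using mNr by (simp add: N_def)
    from arith_final[of "real n1" "real n2" "real n3" "real r" b c \<tau> "real m" \<beta> "real \<theta>" "real s'" "real (l0norm r n2 n3 Bstar)",
        OF _ _ _ _ b0 c0 \<tau>0 _ this \<beta>3 bq _ _ _ ]
    show ?thesis
      using n1 n2 n3 r0 m4 th_lo th_hi s'le
      unfolding lamE[symmetric] \<delta>0_def by (simp add: of_nat_max)
  qed
  have fin: "k * (\<integral>\<omega>. err \<omega> \<partial>M) \<le> 3 * c^2 / (2 * \<tau>^2) * ln (real m) + (3 + c^2 / \<tau>^2) * (\<beta> + 2)
        * (real r * real n1 * real n3 + real (l0norm r n2 n3 Bstar)) * ln (real (max n1 n2))"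
  proof -
    have "k * (\<integral>\<omega>. err \<omega> \<partial>M) \<le> (\<Sum>e\<in>Bx. \<gamma> * (d' e)^2 / \<tau>^2) / 2 + hh * real s' + C0" by (rule main)
    also have "\<dots> \<le> (real m * \<delta>0^2 / \<tau>^2) / 2 + lam * real s' / 2 + (real r * real n1 * real n3 * ln (real \<theta>)
        + real r * real n2 * real n3 * real \<theta> * exp (- lam / 2))"
      using sumd C0le by (intro add_mono) (auto simp: hh_def)
    also have "\<dots> = real m * \<delta>0^2 / (2 * \<tau>^2) + lam * real s' / 2 + real r * real n1 * real n3 * ln (real \<theta>)
      + real r * real n2 * real n3 * real \<theta> * exp (- lam / 2)" by simp
    also note AF
    finally show ?thesis .
  qed
  have kN: "k * real N = real m / (2 * (2 * \<tau> + c)^2)" using \<gamma>N by (simp add: k_def)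
  have kpos: "k > 0" using \<gamma>0 \<tau>0 c0 by (simp add: k_def)
  have "(\<integral>\<omega>. err \<omega> \<partial>M) / real N = k * (\<integral>\<omega>. err \<omega> \<partial>M) / (k * real N)" using kpos Npos by simp
  also have "\<dots> \<le> (3 * c^2 / (2 * \<tau>^2) * ln (real m) + (3 + c^2 / \<tau>^2) * (\<beta> + 2)
        * (real r * real n1 * real n3 + real (l0norm r n2 n3 Bstar)) * ln (real (max n1 n2))) / (k * real N)"
    using fin kpos Npos by (intro divide_right_mono) auto
  also have "\<dots> = 3 * c^2 * (2 * \<tau> + c)^2 * ln (real m) / (real m * \<tau>^2)
       + 2 * (3 + c^2 / \<tau>^2) * (2 * \<tau> + c)^2 * (\<beta> + 2)
         * ((real (r * n1 * n3) + real (l0norm r n2 n3 Bstar)) / real m)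
         * ln (real (max n1 n2))"
    unfolding kN using m4 \<tau>0 c0 by (simp add: field_simps)
  finally show ?thesis by (simp add: N_def)
qed

end
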